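(* For every $n$, the quotient lattice $S_n/\mathcal{H}(\{3412,2413\})_n$ is isomorphic to the subposet of the weak order on $S_n$ induced by the twisted Baxter permutations.
   Context: $S_n$: permutations of $[n]$ in one-line notation with the right weak order (inclusion of sets of inverted value pairs), a lattice. A permutation $x$ is a twisted Baxter permutation if (i) in every occurrence of the pattern 2413 in $x$, the entries playing the roles of "4" and "1" are not adjacent in $x$, and (ii) in every occurrence of 3412, the "4" and "1" are not adjacent. (Pattern $y\in S_k$ occurs in $x$ if there are $i_1<\dots<i_k$ with $x_{i_p}<x_{i_q}\iff y_p<y_q$.) Join-irreducibles of $S_n$ are permutations with exactly one descent; $\gamma_*$ is the unique element they cover. A congruence contracts $\gamma$ if $\gamma\equiv\gamma_*$. $u\times v=u_1\cdots u_p(p+v_1)\cdots(p+v_q)$; $\mathrm{st}(a_1..a_k)$ is the $u\in S_k$ with $u_i<u_j\iff a_i<a_j$. A family $\{\Theta_n\}_{n\ge0}$ of lattice congruences on $S_n$ is translational if $u\times v\equiv u'\times v'$ mod $\Theta_{p+q}$ iff $u\equiv u'$ mod $\Theta_p$ and $v\equiv v'$ mod $\Theta_q$; insertional if for every $p$-subset $Q\subseteq[p+q]$, with $\varphi_Q(u,v)$ the unique $x\in S_{p+q}$ with $\{x_1..x_p\}=Q$, $\mathrm{st}(x_1..x_p)=u$, $\mathrm{st}(x_{p+1}..x_{p+q})=v$, we have $u\equiv u',v\equiv v'\Rightarrow\varphi_Q(u,v)\equiv\varphi_Q(u',v')$; an $\mathcal{H}$-family if both. For a set $C$ of join-irreducibles,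 $\{\mathcal{H}(C)_n\}$ is the smallest $\mathcal{H}$-family contracting every element of $C$. The quotient $L/\Theta$ is the set of classes with $[a]\le[b]$ iff some $x\in[a],y\in[b]$ have $x\le y$. *)

theory Defs
  imports Main
begin

definition perms :: "nat \<Rightarrow> nat list set" where
  "perms n = {x. distinct x \<and> set x = {1..n}}"

definition inv_pairs :: "nat list \<Rightarrow> (nat \<times> nat) set" where
  "inv_pairs x = {(a, b). \<exists>i j. i < j \<and> j < length x \<and> x ! i = b \<and> x ! j = a \<and> a < b}"

definition weak_le :: "nat list \<Rightarrow> nat list \<Rightarrow> bool" where
  "weak_le x y \<longleftrightarrow> inv_pairs x \<subseteq> inv_pairs y"

definition weak_lt :: "nat list \<Rightarrow> nat list \<Rightarrow> bool" where
  "weak_lt x y \<longleftrightarrow> weak_le x y \<and> x \<noteq> y"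

definition weak_join :: "nat \<Rightarrow> nat list \<Rightarrow> nat list \<Rightarrow> nat list" where
  "weak_join n x y = (THE z. z \<in> perms n \<and> weak_le x z \<and> weak_le y z \<and>
      (\<forall>w \<in> perms n. weak_le x w \<and> weak_le y w \<longrightarrow> weak_le z w))"

definition weak_meet :: "nat \<Rightarrow> nat list \<Rightarrow> nat list \<Rightarrow> nat list" where
  "weak_meet n x y = (THE z. z \<in> perms n \<and> weak_le z x \<and> weak_le z y \<and>
      (\<forall>w \<in> perms n. weak_le w x \<and> weak_le w y \<longrightarrow> weak_le w z))"

definition descents :: "nat list \<Rightarrow> nat set" where
  "descents x = {i. Suc i < length x \<and> x ! Suc i < x ! i}"

definition join_irreducible :: "nat list \<Rightarrow> bool" where
  "join_irreducible x \<longleftrightarrow> card (descents x) = 1"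

definition weak_covered :: "nat \<Rightarrow> nat list \<Rightarrow> nat list \<Rightarrow> bool" where
  "weak_covered n y x \<longleftrightarrow> y \<in> perms n \<and> x \<in> perms n \<and> weak_lt y x \<and>
      \<not> (\<exists>z \<in> perms n. weak_lt y z \<and> weak_lt z x)"

(* gamma_*: the unique element covered by a join-irreducible gamma *)
definition lower_star :: "nat list \<Rightarrow> nat list" where
  "lower_star g = (THE y. weak_covered (length g) y g)"

definition lattice_congruence :: "nat \<Rightarrow> (nat list \<times> nat list) set \<Rightarrow> bool" where
  "lattice_congruence n R \<longleftrightarrow> equiv (perms n) R \<and>
     (\<forall>x y z. (x, y) \<in> R \<and> z \<in> perms n \<longrightarrow>
        (weak_join n x z, weak_join n y z) \<in> R \<and> (weak_meet n x z, weak_meet n y z) \<in> R)"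

definition cross :: "nat list \<Rightarrow> nat list \<Rightarrow> nat list" where
  "cross u v = u @ map (\<lambda>i. length u + i) v"

definition st :: "nat list \<Rightarrow> nat list" where
  "st a = map (\<lambda>ai. card {aj \<in> set a. aj \<le> ai}) a"

definition phi :: "nat \<Rightarrow> nat \<Rightarrow> nat set \<Rightarrow> nat list \<Rightarrow> nat list \<Rightarrow> nat list" where
  "phi p q Q u v = (THE x. x \<in> perms (p + q) \<and> set (take p x) = Q \<and>
      st (take p x) = u \<and> st (drop p x) = v)"

definition translational :: "(nat \<Rightarrow> (nat list \<times> nat list) set) \<Rightarrow> bool" where
  "translational \<Theta> \<longleftrightarrow> (\<forall>p q u u' v v'. u \<in> perms p \<and> u' \<in> perms p \<and> v \<in> perms q \<and> v' \<in> perms q \<longrightarrow>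
      ((cross u v, cross u' v') \<in> \<Theta> (p + q) \<longleftrightarrow> (u, u') \<in> \<Theta> p \<and> (v, v') \<in> \<Theta> q))"

definition insertional :: "(nat \<Rightarrow> (nat list \<times> nat list) set) \<Rightarrow> bool" where
  "insertional \<Theta> \<longleftrightarrow> (\<forall>p q Q u u' v v'. Q \<subseteq> {1..p + q} \<and> card Q = p \<and>
      (u, u') \<in> \<Theta> p \<and> (v, v') \<in> \<Theta> q \<longrightarrow> (phi p q Q u v, phi p q Q u' v') \<in> \<Theta> (p + q))"

definition H_family :: "(nat \<Rightarrow> (nat list \<times> nat list) set) \<Rightarrow> bool" where
  "H_family \<Theta> \<longleftrightarrow> (\<forall>n. lattice_congruence n (\<Theta> n)) \<and> translational \<Theta> \<and> insertional \<Theta>"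

definition contracts :: "(nat \<Rightarrow> (nat list \<times> nat list) set) \<Rightarrow> nat list \<Rightarrow> bool" where
  "contracts \<Theta> g \<longleftrightarrow> (g, lower_star g) \<in> \<Theta> (length g)"

definition H_gen :: "nat list set \<Rightarrow> nat \<Rightarrow> (nat list \<times> nat list) set" where
  "H_gen C n = {(x, y). \<forall>\<Theta>. H_family \<Theta> \<and> (\<forall>g \<in> C. contracts \<Theta> g) \<longrightarrow> (x, y) \<in> \<Theta> n}"

definition quot_le :: "nat list set \<Rightarrow> nat list set \<Rightarrow> bool" where
  "quot_le A B \<longleftrightarrow> (\<exists>x \<in> A. \<exists>y \<in> B. weak_le x y)"

definition occurs_at :: "nat list \<Rightarrow> nat list \<Rightarrow> nat list \<Rightarrow> bool" where
  "occurs_at x y ix \<longleftrightarrow> length ix = length y \<and> sorted_wrt (<) ix \<and> (\<forall>i \<in> set ix. i < length x) \<and>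
     (\<forall>p < length y. \<forall>q < length y. x ! (ix ! p) < x ! (ix ! q) \<longleftrightarrow> y ! p < y ! q)"

definition twisted_baxter :: "nat list \<Rightarrow> bool" where
  "twisted_baxter x \<longleftrightarrow>
     (\<forall>ix. occurs_at x [2,4,1,3] ix \<longrightarrow> ix ! 2 \<noteq> Suc (ix ! 1)) \<and>
     (\<forall>ix. occurs_at x [3,4,1,2] ix \<longrightarrow> ix ! 2 \<noteq> Suc (ix ! 1))"

end

theory Submission
  imports Defs
begin

definition before :: "nat list \<Rightarrow> nat \<Rightarrow> nat \<Rightarrow> bool" where
  "before x u v \<longleftrightarrow> (\<exists>i j. i < j \<and> j < length x \<and> x!i = u \<and> x!j = v)"

definition Pairs :: "nat \<Rightarrow> (nat \<times> nat) set" where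
  "Pairs n = {(a,b). 1 \<le> a \<and> a < b \<and> b \<le> n}"

definition cotrans :: "(nat \<times> nat) set \<Rightarrow> bool" where
  "cotrans A \<longleftrightarrow> (\<forall>a b c. a < b \<longrightarrow> b < c \<longrightarrow> (a,c) \<in> A \<longrightarrow> (a,b) \<in> A \<or> (b,c) \<in> A)"

lemma inv_pairs_before: "inv_pairs x = {(a,b). a < b \<and> before x b a}"
  unfolding inv_pairs_def before_def by auto

lemma perms_length: "x \<in> perms n \<Longrightarrow> length x = n"
  unfolding perms_def by (metis (mono_tags) card_atLeastAtMost diff_Suc_1 distinct_card mem_Collect_eq)

lemma perms_distinct: "x \<in> perms n \<Longrightarrow> distinct x"
  unfolding perms_def by auto

lemma perms_set: "x \<in> perms n \<Longrightarrow> set x = {1..n}"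
  unfolding perms_def by auto

lemma before_set: "before x u v \<Longrightarrow> u \<in> set x \<and> v \<in> set x"
  unfolding before_def by auto

lemma before_asym: assumes "distinct x" "before x u v" shows "\<not> before x v u"
proof
  assume "before x v u"
  then obtain i' j' where 1: "i' < j'" "j' < length x" "x!i' = v" "x!j' = u" unfolding before_def by auto
  from assms(2) obtain i j where 2: "i < j" "j < length x" "x!i = u" "x!j = v" unfolding before_def by auto
  have "i = j'" using 1 2 assms(1) nth_eq_iff_index_eq[of x i j'] by auto
  moreover have "j = i'" using 1 2 assms(1) nth_eq_iff_index_eq[of x j i'] by auto
  ultimately show False using 1 2 by auto
qed

lemma before_irrefl: "distinct x \<Longrightarrow> \<not> before x u u"
  using before_asym by blast

lemma before_trans: assumes "distinct x" "before x u v" "before x v w" shows "before x u w"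
proof -
  obtain i j where 1: "i < j" "j < length x" "x!i = u" "x!j = v" using assms(2) unfolding before_def by auto
  obtain i' j' where 2: "i' < j'" "j' < length x" "x!i' = v" "x!j' = w" using assms(3) unfolding before_def by auto
  have "j = i'" using 1 2 assms(1) nth_eq_iff_index_eq[of x j i'] by auto
  then show ?thesis using 1 2 unfolding before_def by (intro exI[of _ i] exI[of _ j']) auto
qed

lemma before_total: assumes "u \<in> set x" "v \<in> set x" "u \<noteq> v" shows "before x u v \<or> before x v u"
proof -
  obtain i where i: "i < length x" "x!i = u" using assms(1) by (auto simp: in_set_conv_nth)
  obtain j where j: "j < length x" "x!j = v" using assms(2) by (auto simp: in_set_conv_nth)
  have "i \<noteq> j" using i j assms(3) by auto
  then show ?thesis using i j unfolding before_def
    by (metis linorder_neqE_nat)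
qed

lemma before_nth: assumes "distinct x" "k < length x"
  shows "before x u (x!k) \<longleftrightarrow> u \<in> set (take k x)"
proof
  assume "before x u (x!k)"
  then obtain i j where 1: "i < j" "j < length x" "x!i = u" "x!j = x!k" unfolding before_def by auto
  have "j = k" using 1 assms nth_eq_iff_index_eq[of x j k] by auto
  then show "u \<in> set (take k x)" using 1 by (auto simp: in_set_conv_nth intro!: exI[of _ i])
next
  assume "u \<in> set (take k x)"
  then obtain i where "i < k" "x!i = u" using assms by (auto simp: in_set_conv_nth)
  then show "before x u (x!k)" using assms unfolding before_def by auto
qed

lemma card_before_nth: assumes "distinct x" "k < length x"
  shows "card {u. before x u (x!k)} = k"
proof -
  have "{u. before x u (x!k)} = set (take k x)" using before_nth[OF assms] by auto
  then show ?thesis using assms by (simp add: distinct_card)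
qed

lemma before_eq_imp_eq: assumes "distinct x" "distinct y" "set x = set y"
  and "\<And>u v. before x u v \<longleftrightarrow> before y u v" shows "x = y"
proof -
  have len: "length x = length y" using assms by (metis distinct_card)
  show ?thesis
  proof (rule nth_equalityI[OF len])
    fix k assume k: "k < length x"
    then have "x!k \<in> set y" by (metis assms(3) nth_mem)
    then obtain k' where k': "k' < length y" "y!k' = x!k" by (auto simp: in_set_conv_nth)
    have "card {u. before x u (x!k)} = k" using card_before_nth[OF assms(1) k] .
    moreover have "card {u. before y u (y!k')} = k'" using card_before_nth[OF assms(2) k'(1)] .
    ultimately have "k = k'" using assms(4) k' by simp
    then show "x!k = y!k" using k' by simp
  qed
qed

lemma inv_pairs_sub_Pairs: "x \<in> perms n \<Longrightarrow> inv_pairs x \<subseteq> Pairs n"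
  unfolding inv_pairs_before Pairs_def using perms_set before_set
  by fastforce

lemma inv_pairs_trans: "distinct x \<Longrightarrow> trans (inv_pairs x)"
  unfolding inv_pairs_before trans_def using before_trans by fastforce

lemma inv_pairs_cotrans: assumes "x \<in> perms n" shows "cotrans (inv_pairs x)"
  unfolding cotrans_def
proof (intro allI impI)
  fix a b c assume abc: "a < b" "b < c" "(a,c) \<in> inv_pairs x"
  then have bca: "before x c a" unfolding inv_pairs_before by auto
  then have "a \<in> set x" "c \<in> set x" using before_set by auto
  then have "b \<in> set x" using abc perms_set[OF assms] by auto
  have d: "distinct x" using perms_distinct[OF assms] .
  have "b \<noteq> a" using abc by auto
  show "(a,b) \<in> inv_pairs x \<or> (b,c) \<in> inv_pairs x"
  proof (cases "before x b a")
    case True then show ?thesis using abc unfolding inv_pairs_before by auto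
  next
    case False
    then have "before x a b" using before_total[OF \<open>b \<in> set x\<close> \<open>a \<in> set x\<close>] \<open>b \<noteq> a\<close> by auto
    then have "before x c b" using before_trans[OF d bca] by auto
    then show ?thesis using abc unfolding inv_pairs_before by auto
  qed
qed

lemma before_from_inv: assumes "x \<in> perms n" "u \<in> {1..n}" "v \<in> {1..n}"
  shows "before x u v \<longleftrightarrow> (u < v \<and> (u,v) \<notin> inv_pairs x) \<or> (v < u \<and> (v,u) \<in> inv_pairs x)"
proof -
  have d: "distinct x" using perms_distinct[OF assms(1)] .
  have s: "u \<in> set x" "v \<in> set x" using assms perms_set by auto
  show ?thesis
  proof (cases "u = v")
    case True then show ?thesis using before_irrefl[OF d] by auto
  next
    case False
    then have "before x u v \<or> before x v u" using before_total[OF s] by auto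
    then show ?thesis using before_asym[OF d] False unfolding inv_pairs_before by auto
  qed
qed

lemma inv_pairs_inj: assumes "x \<in> perms n" "y \<in> perms n" "inv_pairs x = inv_pairs y"
  shows "x = y"
proof (rule before_eq_imp_eq)
  show "distinct x" "distinct y" using assms perms_distinct by auto
  show "set x = set y" using assms perms_set by auto
  fix u v
  show "before x u v \<longleftrightarrow> before y u v"
  proof (cases "u \<in> {1..n} \<and> v \<in> {1..n}")
    case True then show ?thesis using before_from_inv[OF assms(1)] before_from_inv[OF assms(2)] assms(3) by auto
  next
    case False then show ?thesis using before_set assms perms_set by blast
  qed
qed

lemma weak_le_antisym: "x \<in> perms n \<Longrightarrow> y \<in> perms n \<Longrightarrow> weak_le x y \<Longrightarrow> weak_le y x \<Longrightarrow> x = y"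
  unfolding weak_le_def using inv_pairs_inj by blast

section \<open>Realization\<close>

lemma realize:
  assumes sub: "A \<subseteq> Pairs n" and tr: "trans A" and ct: "cotrans A"
  shows "\<exists>x \<in> perms n. inv_pairs x = A"
proof -
  define P where "P u v \<longleftrightarrow> (u < v \<and> (u,v) \<notin> A) \<or> (v < u \<and> (v,u) \<in> A)" for u v
  have Ptrans: "P u w" if "P u v" "P v w" for u v w
  proof -
    have "u \<noteq> v" "v \<noteq> w" using that unfolding P_def by auto
    have ctD: "(a,b) \<in> A \<or> (b,c) \<in> A" if "a < b" "b < c" "(a,c) \<in> A" for a b c
      using ct that unfolding cotrans_def by blast
    have trD: "(a,c) \<in> A" if "(a,b) \<in> A" "(b,c) \<in> A" for a b c
      using tr that unfolding trans_def by blast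
    consider "u < v" "v < w" | "u < w" "w < v" | "v < u" "u < w" | "v < w" "w < u"
      | "w < u" "u < v" | "w < v" "v < u" | "u = w"
      using \<open>u \<noteq> v\<close> \<open>v \<noteq> w\<close> by linarith
    then show ?thesis
    proof cases
      case 1 then show ?thesis using that ctD[of u v w] unfolding P_def by auto
    next
      case 2 then show ?thesis using that trD[of u w v] unfolding P_def by auto
    next
      case 3 then show ?thesis using that trD[of v u w] unfolding P_def by auto
    next
      case 4 then show ?thesis using that ctD[of v w u] unfolding P_def by auto
    next
      case 5 then show ?thesis using that ctD[of w u v] unfolding P_def by auto
    next
      case 6 then show ?thesis using that trD[of w v u] unfolding P_def by auto
    next
      case 7 then show ?thesis using that unfolding P_def by auto
    qed
  qed
  have Pirr: "\<not> P u u" for u unfolding P_def by auto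
  have Ptot: "P u v \<or> P v u" if "u \<noteq> v" for u v using that unfolding P_def by auto
  define r where "r u = card {v \<in> {1..n}. P v u}" for u
  have rlt: "r u < r v" if "P u v" "u \<in> {1..n}" for u v
  proof -
    have "{w \<in> {1..n}. P w u} \<subset> {w \<in> {1..n}. P w v}"
      using that Ptrans Pirr by blast
    then show ?thesis unfolding r_def by (intro psubset_card_mono) auto
  qed
  define x where "x = sort_key r [1..<Suc n]"
  have dx: "distinct x" and sx: "set x = {1..n}" and lx: "length x = n"
    unfolding x_def by auto
  have xp: "x \<in> perms n" unfolding perms_def using dx sx by auto
  have srt: "sorted (map r x)" unfolding x_def by simp
  have bP: "before x u v \<longleftrightarrow> P u v" if "u \<in> {1..n}" "v \<in> {1..n}" for u v
  proof
    assume "P u v"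
    show "before x u v"
    proof (rule ccontr)
      assume nb: "\<not> before x u v"
      have "u \<noteq> v" using \<open>P u v\<close> Pirr by auto
      then have "before x v u" using before_total[of u x v] nb that sx by auto
      then obtain i j where ij: "i < j" "j < length x" "x!i = v" "x!j = u" unfolding before_def by auto
      then have "r v \<le> r u" using srt sorted_nth_mono[of "map r x" i j] by auto
      moreover have "r u < r v" using rlt[OF \<open>P u v\<close> that(1)] .
      ultimately show False by auto
    qed
  next
    assume b: "before x u v"
    show "P u v"
    proof (rule ccontr)
      assume "\<not> P u v"
      moreover have "u \<noteq> v" using b before_irrefl[OF dx] by auto
      ultimately have "P v u" using Ptot by auto
      have "r v < r u" using rlt[OF \<open>P v u\<close> that(2)] .
      obtain i j where ij: "i < j" "j < length x" "x!i = u" "x!j = v" using b unfolding before_def by auto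
      then have "r u \<le> r v" using srt sorted_nth_mono[of "map r x" i j] by auto
      then show False using \<open>r v < r u\<close> by auto
    qed
  qed
  have "inv_pairs x = A"
  proof
    show "inv_pairs x \<subseteq> A"
    proof
      fix p assume "p \<in> inv_pairs x"
      then obtain a b where p: "p = (a,b)" "a < b" "before x b a" unfolding inv_pairs_before by auto
      then have "a \<in> {1..n}" "b \<in> {1..n}" using before_set sx by auto
      then show "p \<in> A" using p bP unfolding P_def by auto
    qed
  next
    show "A \<subseteq> inv_pairs x"
    proof
      fix p assume "p \<in> A"
      then obtain a b where p: "p = (a,b)" "1 \<le> a" "a < b" "b \<le> n" using sub unfolding Pairs_def by auto
      then have "P b a" unfolding P_def using \<open>p \<in> A\<close> by auto
      then have "before x b a" using bP p by auto
      then show "p \<in> inv_pairs x" using p unfolding inv_pairs_before by auto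
    qed
  qed
  then show ?thesis using xp by auto
qed

definition Sd :: "(nat \<times> nat) set \<Rightarrow> (nat \<times> nat) set" where
  "Sd A = {(p,q). p < q \<and> (\<forall>c. p < c \<longrightarrow> c \<le> q \<longrightarrow> (p,c) \<in> A)}"

definition Su :: "(nat \<times> nat) set \<Rightarrow> (nat \<times> nat) set" where
  "Su A = {(p,q). p < q \<and> (\<forall>c. p \<le> c \<longrightarrow> c < q \<longrightarrow> (c,q) \<in> A)}"

definition incr :: "(nat \<times> nat) set \<Rightarrow> bool" where
  "incr A \<longleftrightarrow> (\<forall>a b. (a,b) \<in> A \<longrightarrow> a < b)"

lemma Sd_mono: "A \<subseteq> B \<Longrightarrow> Sd A \<subseteq> Sd B" unfolding Sd_def by blast
lemma Su_mono: "A \<subseteq> B \<Longrightarrow> Su A \<subseteq> Su B" unfolding Su_def by blast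
lemma Sd_sub: "Sd A \<subseteq> A" unfolding Sd_def by auto
lemma Su_sub: "Su A \<subseteq> A" unfolding Su_def by auto

lemma incr_Pairs: "A \<subseteq> Pairs n \<Longrightarrow> incr A" unfolding incr_def Pairs_def by auto
lemma incr_inv: "incr (inv_pairs x)" unfolding incr_def inv_pairs_def by auto

lemma incr_trancl: assumes "incr M" shows "incr (M\<^sup>+)"
  unfolding incr_def
proof (intro allI impI)
  fix a b assume "(a,b) \<in> M\<^sup>+"
  then show "a < b"
    by (induction rule: trancl_induct) (use assms in \<open>auto simp: incr_def\<close>, fastforce)
qed

lemma cotrans_Un: "cotrans A \<Longrightarrow> cotrans B \<Longrightarrow> cotrans (A \<union> B)"
  unfolding cotrans_def by blast

lemma cotrans_trancl: assumes inc: "incr M" and ct: "cotrans M" shows "cotrans (M\<^sup>+)"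
proof -
  have "\<forall>b. a < b \<longrightarrow> b < c \<longrightarrow> (a,b) \<in> M\<^sup>+ \<or> (b,c) \<in> M\<^sup>+" if "(a,c) \<in> M\<^sup>+" for a c
    using that
  proof (induction rule: trancl_induct)
    case (base y)
    then show ?case using ct unfolding cotrans_def by blast
  next
    case (step d c)
    show ?case
    proof (intro allI impI)
      fix b assume b: "a < b" "b < c"
      have ad: "a < d" using incr_trancl[OF inc] step(1) unfolding incr_def by auto
      have dc: "d < c" using inc step(2) unfolding incr_def by auto
      consider "b < d" | "b = d" | "d < b" by linarith
      then show "(a,b) \<in> M\<^sup>+ \<or> (b,c) \<in> M\<^sup>+"
      proof cases
        case 1
        then have "(a,b) \<in> M\<^sup>+ \<or> (b,d) \<in> M\<^sup>+" using step(3) b by auto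
        then show ?thesis using step(2) by (meson trancl.trancl_into_trancl)
      next
        case 2 then show ?thesis using step(1) by auto
      next
        case 3
        then have "(d,b) \<in> M \<or> (b,c) \<in> M" using ct step(2) b unfolding cotrans_def by blast
        then show ?thesis using step(1) by (meson r_into_trancl' trancl.trancl_into_trancl)
      qed
    qed
  qed
  then show ?thesis unfolding cotrans_def by blast
qed

lemma trans_Pairs: "trans (Pairs n)" unfolding trans_def Pairs_def by auto

lemma trancl_sub_Pairs: "A \<subseteq> Pairs n \<Longrightarrow> A\<^sup>+ \<subseteq> Pairs n"
  by (metis trancl_id trancl_mono trans_Pairs subsetI)

lemma compl_props: assumes "A \<subseteq> Pairs n" "trans A" "cotrans A"
  shows "trans (Pairs n - A)" "cotrans (Pairs n - A)"
proof -
  show "trans (Pairs n - A)" unfolding trans_def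
  proof (intro allI impI)
    fix a b c assume h: "(a,b) \<in> Pairs n - A" "(b,c) \<in> Pairs n - A"
    then have "(a,c) \<in> Pairs n" unfolding Pairs_def by auto
    moreover have "(a,c) \<notin> A"
    proof
      assume "(a,c) \<in> A"
      moreover have "a < b" "b < c" using h unfolding Pairs_def by auto
      ultimately show False using assms(3) h unfolding cotrans_def by blast
    qed
    ultimately show "(a,c) \<in> Pairs n - A" by auto
  qed
  show "cotrans (Pairs n - A)" unfolding cotrans_def
  proof (intro allI impI)
    fix a b c assume h: "a < b" "b < c" "(a,c) \<in> Pairs n - A"
    then have "(a,b) \<in> Pairs n" "(b,c) \<in> Pairs n" unfolding Pairs_def by auto
    then show "(a,b) \<in> Pairs n - A \<or> (b,c) \<in> Pairs n - A"
      using h assms(2) unfolding trans_def by blast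
  qed
qed

section \<open>Joins and meets\<close>

lemma join_exists: assumes x: "x \<in> perms n" and z: "z \<in> perms n"
  shows "weak_join n x z \<in> perms n \<and> inv_pairs (weak_join n x z) = (inv_pairs x \<union> inv_pairs z)\<^sup>+"
proof -
  let ?W = "(inv_pairs x \<union> inv_pairs z)\<^sup>+"
  have sub: "?W \<subseteq> Pairs n" using inv_pairs_sub_Pairs[OF x] inv_pairs_sub_Pairs[OF z]
    by (intro trancl_sub_Pairs) auto
  have ct: "cotrans ?W"
    by (intro cotrans_trancl cotrans_Un inv_pairs_cotrans[OF x] inv_pairs_cotrans[OF z])
       (use incr_inv in \<open>auto simp: incr_def\<close>)
  obtain w where w: "w \<in> perms n" "inv_pairs w = ?W" using realize[OF sub trans_trancl ct] by auto
  have least: "weak_le w v" if "v \<in> perms n" "weak_le x v" "weak_le z v" for v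
  proof -
    have "inv_pairs x \<union> inv_pairs z \<subseteq> inv_pairs v" using that unfolding weak_le_def by auto
    then have "?W \<subseteq> (inv_pairs v)\<^sup>+" by (rule trancl_mono_subset)
    also have "\<dots> = inv_pairs v" using inv_pairs_trans[OF perms_distinct[OF that(1)]] by (rule trancl_id)
    finally show ?thesis using w unfolding weak_le_def by auto
  qed
  have P: "w \<in> perms n \<and> weak_le x w \<and> weak_le z w \<and>
      (\<forall>v \<in> perms n. weak_le x v \<and> weak_le z v \<longrightarrow> weak_le w v)"
    using w least unfolding weak_le_def by auto
  have "weak_join n x z = w" unfolding weak_join_def
  proof (rule the_equality)
    show "w \<in> perms n \<and> weak_le x w \<and> weak_le z w \<and>
      (\<forall>v \<in> perms n. weak_le x v \<and> weak_le z v \<longrightarrow> weak_le w v)" by (rule P)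
    fix v assume "v \<in> perms n \<and> weak_le x v \<and> weak_le z v \<and>
      (\<forall>u \<in> perms n. weak_le x u \<and> weak_le z u \<longrightarrow> weak_le v u)"
    then show "v = w" using P weak_le_antisym by blast
  qed
  then show ?thesis using w by auto
qed

definition Npairs :: "nat \<Rightarrow> nat list \<Rightarrow> (nat \<times> nat) set" where
  "Npairs n x = Pairs n - inv_pairs x"

lemma meet_exists: assumes x: "x \<in> perms n" and z: "z \<in> perms n"
  shows "weak_meet n x z \<in> perms n \<and>
    inv_pairs (weak_meet n x z) = Pairs n - (Npairs n x \<union> Npairs n z)\<^sup>+"
proof -
  let ?M = "(Npairs n x \<union> Npairs n z)\<^sup>+"
  have cx: "trans (Npairs n x)" "cotrans (Npairs n x)"
    unfolding Npairs_def by (intro compl_props inv_pairs_sub_Pairs[OF x] inv_pairs_trans[OF perms_distinct[OF x]] inv_pairs_cotrans[OF x])+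
  have cz: "trans (Npairs n z)" "cotrans (Npairs n z)"
    unfolding Npairs_def by (intro compl_props inv_pairs_sub_Pairs[OF z] inv_pairs_trans[OF perms_distinct[OF z]] inv_pairs_cotrans[OF z])+
  have subN: "Npairs n x \<union> Npairs n z \<subseteq> Pairs n" unfolding Npairs_def by auto
  have sub: "?M \<subseteq> Pairs n" using subN by (rule trancl_sub_Pairs)
  have ct: "cotrans ?M"
    by (intro cotrans_trancl cotrans_Un cx cz incr_Pairs[OF subN])
  have props: "trans (Pairs n - ?M)" "cotrans (Pairs n - ?M)"
    using compl_props[OF sub trans_trancl ct] by auto
  obtain w where w: "w \<in> perms n" "inv_pairs w = Pairs n - ?M"
    using realize[OF _ props] by blast
  have below: "weak_le w x" "weak_le w z"
    using w inv_pairs_sub_Pairs[OF x] inv_pairs_sub_Pairs[OF z] unfolding weak_le_def Npairs_def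
    by auto
  have greatest: "weak_le v w" if "v \<in> perms n" "weak_le v x" "weak_le v z" for v
  proof -
    have tv: "trans (Npairs n v)"
      unfolding Npairs_def by (intro compl_props inv_pairs_sub_Pairs[OF that(1)] inv_pairs_trans[OF perms_distinct[OF that(1)]] inv_pairs_cotrans[OF that(1)])
    have "Npairs n x \<union> Npairs n z \<subseteq> Npairs n v" using that unfolding weak_le_def Npairs_def by auto
    then have "?M \<subseteq> (Npairs n v)\<^sup>+" by (rule trancl_mono_subset)
    also have "\<dots> = Npairs n v" using tv by (rule trancl_id)
    finally show ?thesis using w inv_pairs_sub_Pairs[OF that(1)] unfolding weak_le_def Npairs_def by auto
  qed
  have P: "w \<in> perms n \<and> weak_le w x \<and> weak_le w z \<and>
      (\<forall>v \<in> perms n. weak_le v x \<and> weak_le v z \<longrightarrow> weak_le v w)"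
    using w below greatest by auto
  have "weak_meet n x z = w" unfolding weak_meet_def
  proof (rule the_equality)
    show "w \<in> perms n \<and> weak_le w x \<and> weak_le w z \<and>
      (\<forall>v \<in> perms n. weak_le v x \<and> weak_le v z \<longrightarrow> weak_le v w)" by (rule P)
    fix v assume "v \<in> perms n \<and> weak_le v x \<and> weak_le v z \<and>
      (\<forall>u \<in> perms n. weak_le u x \<and> weak_le u z \<longrightarrow> weak_le u v)"
    then show "v = w" using P weak_le_antisym by blast
  qed
  then show ?thesis using w by auto
qed

lemma Sd_join_aux:
  assumes iI: "incr I" and iJ: "incr J" and cI: "cotrans I"
  shows "(p,q) \<in> Sd ((I \<union> J)\<^sup>+) \<Longrightarrow> (p,q) \<in> (Sd I \<union> J)\<^sup>+"
proof (induction q rule: less_induct)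
  case (less q)
  let ?W = "(I \<union> J)\<^sup>+" and ?V = "(Sd I \<union> J)\<^sup>+"
  have iU: "incr (I \<union> J)" using iI iJ unfolding incr_def by auto
  have iW: "incr ?W" using incr_trancl[OF iU] .
  have pq: "(p,q) \<in> ?W" "p < q" using less.prems unfolding Sd_def by auto
  have down: "(p,c) \<in> ?V" if "p < c" "c < q" for c
    using less.IH[of c] that less.prems unfolding Sd_def by auto
  obtain d where d: "(d,q) \<in> I \<union> J" "d = p \<or> (p,d) \<in> ?W"
    using pq(1) by (cases rule: tranclE) auto
  have dq: "d < q" using d(1) iU unfolding incr_def by auto
  have pd: "p \<le> d" using d(2) iW unfolding incr_def by fastforce
  have pdV: "d = p \<or> (p,d) \<in> ?V" using d(2) down dq pd by (cases "d = p") auto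
  have "\<exists>e. (e = p \<or> (p,e) \<in> ?V) \<and> (e,q) \<in> ?V"
  proof (cases "(d,q) \<in> J")
    case True then show ?thesis using pdV by blast
  next
    case False
    then have dqI: "(d,q) \<in> I" using d(1) by auto
    show ?thesis
    proof (cases "\<forall>c. d < c \<longrightarrow> c \<le> q \<longrightarrow> (d,c) \<in> I")
      case True
      then have "(d,q) \<in> Sd I" using dq unfolding Sd_def by auto
      then show ?thesis using pdV by blast
    next
      case False
      let ?C = "{c. d < c \<and> c \<le> q \<and> (d,c) \<notin> I}"
      have fin: "finite ?C" by (rule finite_subset[of _ "{..q}"]) auto
      have ne: "?C \<noteq> {}" using False by auto
      define c0 where "c0 = Max ?C"
      have c0: "c0 \<in> ?C" unfolding c0_def using fin ne by (rule Max_in)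
      have c0max: "c \<le> c0" if "c \<in> ?C" for c unfolding c0_def using fin that by (rule Max_ge)
      have c0q: "c0 < q" using c0 dqI by (cases "c0 = q") auto
      have "(c0,q) \<in> Sd I" unfolding Sd_def
      proof (intro CollectI case_prodI conjI allI impI)
        show "c0 < q" by fact
        fix c assume c: "c0 < c" "c \<le> q"
        then have "(d,c) \<in> I" using c0max[of c] c0 by (cases "(d,c) \<in> I") auto
        then show "(c0,c) \<in> I" using cI c0 c unfolding cotrans_def by blast
      qed
      moreover have "(p,c0) \<in> ?V" using down[of c0] c0 pd c0q by auto
      ultimately show ?thesis by blast
    qed
  qed
  then obtain e where e: "e = p \<or> (p,e) \<in> ?V" "(e,q) \<in> ?V" by blast
  then show ?case by (metis trancl_trans)
qed

lemma Sd_join_sub: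
  assumes "incr I" "incr J" "incr K" "cotrans I" "Sd I = Sd K"
  shows "Sd ((I \<union> J)\<^sup>+) \<subseteq> Sd ((K \<union> J)\<^sup>+)"
proof
  fix pq assume h: "pq \<in> Sd ((I \<union> J)\<^sup>+)"
  then obtain p q where pq: "pq = (p,q)" "p < q" by (auto simp: Sd_def)
  have "(p,c) \<in> (K \<union> J)\<^sup>+" if "p < c" "c \<le> q" for c
  proof -
    have "(p,c) \<in> Sd ((I \<union> J)\<^sup>+)" using h pq that unfolding Sd_def by auto
    then have "(p,c) \<in> (Sd I \<union> J)\<^sup>+" using Sd_join_aux assms by blast
    also have "(Sd I \<union> J)\<^sup>+ \<subseteq> (K \<union> J)\<^sup>+" using assms(5) Sd_sub by (intro trancl_mono_subset) auto
    finally show ?thesis .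
  qed
  then show "pq \<in> Sd ((K \<union> J)\<^sup>+)" using pq unfolding Sd_def by auto
qed

lemma Su_join_aux:
  assumes iI: "incr I" and iJ: "incr J" and cI: "cotrans I"
  shows "(p,q) \<in> Su ((I \<union> J)\<^sup>+) \<Longrightarrow> (p,q) \<in> (Su I \<union> J)\<^sup>+"
proof (induction "q - p" arbitrary: p rule: less_induct)
  case (less p)
  let ?W = "(I \<union> J)\<^sup>+" and ?V = "(Su I \<union> J)\<^sup>+"
  have iU: "incr (I \<union> J)" using iI iJ unfolding incr_def by auto
  have iW: "incr ?W" using incr_trancl[OF iU] .
  have pq: "(p,q) \<in> ?W" "p < q" using less.prems unfolding Su_def by auto
  have up: "(c,q) \<in> ?V" if "p < c" "c < q" for c
    using less.hyps[of c] that less.prems unfolding Su_def by auto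
  obtain d where d: "(p,d) \<in> I \<union> J" "d = q \<or> (d,q) \<in> ?W"
    using pq(1) by (cases rule: converse_tranclE) auto
  have pd: "p < d" using d(1) iU unfolding incr_def by auto
  have dq: "d \<le> q" using d(2) iW unfolding incr_def by fastforce
  have dqV: "d = q \<or> (d,q) \<in> ?V" using d(2) up dq pd by (cases "d = q") auto
  have "\<exists>e. (p,e) \<in> ?V \<and> (e = q \<or> (e,q) \<in> ?V)"
  proof (cases "(p,d) \<in> J")
    case True then show ?thesis using dqV by blast
  next
    case False
    then have pdI: "(p,d) \<in> I" using d(1) by auto
    show ?thesis
    proof (cases "\<forall>c. p \<le> c \<longrightarrow> c < d \<longrightarrow> (c,d) \<in> I")
      case True
      then have "(p,d) \<in> Su I" using pd unfolding Su_def by auto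
      then show ?thesis using dqV by blast
    next
      case False
      let ?C = "{c. p \<le> c \<and> c < d \<and> (c,d) \<notin> I}"
      have fin: "finite ?C" by (rule finite_subset[of _ "{..d}"]) auto
      have ne: "?C \<noteq> {}" using False by auto
      define c0 where "c0 = Min ?C"
      have c0: "c0 \<in> ?C" unfolding c0_def using fin ne by (rule Min_in)
      have c0min: "c0 \<le> c" if "c \<in> ?C" for c unfolding c0_def using fin that by (rule Min_le)
      have pc0: "p < c0" using c0 pdI by (cases "c0 = p") auto
      have "(p,c0) \<in> Su I" unfolding Su_def
      proof (intro CollectI case_prodI conjI allI impI)
        show "p < c0" by fact
        fix c assume c: "p \<le> c" "c < c0"
        then have "(c,d) \<in> I" using c0min[of c] c0 by (cases "(c,d) \<in> I") auto
        then show "(c,c0) \<in> I" using cI c0 c unfolding cotrans_def by blast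
      qed
      moreover have "(c0,q) \<in> ?V" using up[of c0] c0 dq pc0 by auto
      ultimately show ?thesis by blast
    qed
  qed
  then obtain e where e: "(p,e) \<in> ?V" "e = q \<or> (e,q) \<in> ?V" by blast
  then show ?case by (metis trancl_trans)
qed

lemma Su_join_sub:
  assumes "incr I" "incr J" "incr K" "cotrans I" "Su I = Su K"
  shows "Su ((I \<union> J)\<^sup>+) \<subseteq> Su ((K \<union> J)\<^sup>+)"
proof
  fix pq assume h: "pq \<in> Su ((I \<union> J)\<^sup>+)"
  then obtain p q where pq: "pq = (p,q)" "p < q" by (auto simp: Su_def)
  have "(c,q) \<in> (K \<union> J)\<^sup>+" if "p \<le> c" "c < q" for c
  proof -
    have "(c,q) \<in> Su ((I \<union> J)\<^sup>+)" using h pq that unfolding Su_def by auto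
    then have "(c,q) \<in> (Su I \<union> J)\<^sup>+" using Su_join_aux assms by blast
    also have "(Su I \<union> J)\<^sup>+ \<subseteq> (K \<union> J)\<^sup>+" using assms(5) Su_sub by (intro trancl_mono_subset) auto
    finally show ?thesis .
  qed
  then show "pq \<in> Su ((K \<union> J)\<^sup>+)" using pq unfolding Su_def by auto
qed

lemma first_step: assumes "incr M" "(p,c) \<in> M\<^sup>+" shows "\<exists>d. p < d \<and> d \<le> c \<and> (p,d) \<in> M"
  using assms(2)
proof (rule converse_tranclE)
  assume "(p,c) \<in> M" then show ?thesis using assms(1) unfolding incr_def by auto
next
  fix d assume s1: "(p,d) \<in> M" and s2: "(d,c) \<in> M\<^sup>+"
  have "p < d" using assms(1) s1 unfolding incr_def by auto
  moreover have "d < c" using incr_trancl[OF assms(1)] s2 unfolding incr_def by auto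
  ultimately show ?thesis using s1 by (auto intro!: exI[of _ d])
qed

lemma last_step: assumes "incr M" "(c,q) \<in> M\<^sup>+" shows "\<exists>d. c \<le> d \<and> d < q \<and> (d,q) \<in> M"
  using assms(2)
proof (cases rule: tranclE)
  case base then show ?thesis using assms(1) unfolding incr_def by auto
next
  case (step d)
  have "c < d" using incr_trancl[OF assms(1)] step(1) unfolding incr_def by auto
  moreover have "d < q" using assms(1) step(2) unfolding incr_def by auto
  ultimately show ?thesis using step(2) by (auto intro!: exI[of _ d])
qed

lemma Sd_meet: assumes "N1 \<union> N2 \<subseteq> Pairs n"
  shows "Sd (Pairs n - (N1 \<union> N2)\<^sup>+) = Sd (Pairs n - N1) \<inter> Sd (Pairs n - N2)"
proof
  show "Sd (Pairs n - (N1 \<union> N2)\<^sup>+) \<subseteq> Sd (Pairs n - N1) \<inter> Sd (Pairs n - N2)"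
    by (intro Int_greatest Sd_mono) auto
next
  have inc: "incr (N1 \<union> N2)" using assms by (rule incr_Pairs)
  show "Sd (Pairs n - N1) \<inter> Sd (Pairs n - N2) \<subseteq> Sd (Pairs n - (N1 \<union> N2)\<^sup>+)"
  proof
    fix pq assume h: "pq \<in> Sd (Pairs n - N1) \<inter> Sd (Pairs n - N2)"
    then obtain p q where pq: "pq = (p,q)" "p < q" by (auto simp: Sd_def)
    have "(p,c) \<in> Pairs n - (N1 \<union> N2)\<^sup>+" if "p < c" "c \<le> q" for c
    proof -
      have "(p,c) \<in> Pairs n" using h pq that unfolding Sd_def by auto
      moreover have "(p,c) \<notin> (N1 \<union> N2)\<^sup>+"
      proof
        assume "(p,c) \<in> (N1 \<union> N2)\<^sup>+"
        then obtain d where "p < d" "d \<le> c" "(p,d) \<in> N1 \<union> N2" using first_step[OF inc] by blast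
        then show False using h pq that unfolding Sd_def by auto
      qed
      ultimately show ?thesis by auto
    qed
    then show "pq \<in> Sd (Pairs n - (N1 \<union> N2)\<^sup>+)" using pq unfolding Sd_def by auto
  qed
qed

lemma Su_meet: assumes "N1 \<union> N2 \<subseteq> Pairs n"
  shows "Su (Pairs n - (N1 \<union> N2)\<^sup>+) = Su (Pairs n - N1) \<inter> Su (Pairs n - N2)"
proof
  show "Su (Pairs n - (N1 \<union> N2)\<^sup>+) \<subseteq> Su (Pairs n - N1) \<inter> Su (Pairs n - N2)"
    by (intro Int_greatest Su_mono) auto
next
  have inc: "incr (N1 \<union> N2)" using assms by (rule incr_Pairs)
  show "Su (Pairs n - N1) \<inter> Su (Pairs n - N2) \<subseteq> Su (Pairs n - (N1 \<union> N2)\<^sup>+)"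
  proof
    fix pq assume h: "pq \<in> Su (Pairs n - N1) \<inter> Su (Pairs n - N2)"
    then obtain p q where pq: "pq = (p,q)" "p < q" by (auto simp: Su_def)
    have "(c,q) \<in> Pairs n - (N1 \<union> N2)\<^sup>+" if "p \<le> c" "c < q" for c
    proof -
      have "(c,q) \<in> Pairs n" using h pq that unfolding Su_def by auto
      moreover have "(c,q) \<notin> (N1 \<union> N2)\<^sup>+"
      proof
        assume "(c,q) \<in> (N1 \<union> N2)\<^sup>+"
        then obtain d where "c \<le> d" "d < q" "(d,q) \<in> N1 \<union> N2" using last_step[OF inc] by blast
        then show False using h pq that unfolding Su_def by auto
      qed
      ultimately show ?thesis by auto
    qed
    then show "pq \<in> Su (Pairs n - (N1 \<union> N2)\<^sup>+)" using pq unfolding Su_def by auto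
  qed
qed

definition Th :: "nat \<Rightarrow> (nat list \<times> nat list) set" where
  "Th n = {(x,y). x \<in> perms n \<and> y \<in> perms n \<and> Sd (inv_pairs x) = Sd (inv_pairs y) \<and>
                   Su (inv_pairs x) = Su (inv_pairs y)}"

lemma Th_equiv: "equiv (perms n) (Th n)"
  unfolding equiv_def refl_on_def sym_def trans_def Th_def by auto

lemma Th_join: assumes "(x,y) \<in> Th n" "z \<in> perms n"
  shows "(weak_join n x z, weak_join n y z) \<in> Th n"
proof -
  have x: "x \<in> perms n" and y: "y \<in> perms n" and sd: "Sd (inv_pairs x) = Sd (inv_pairs y)"
    and su: "Su (inv_pairs x) = Su (inv_pairs y)" using assms(1) unfolding Th_def by auto
  note jx = join_exists[OF x assms(2)] and jy = join_exists[OF y assms(2)]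
  note ct = inv_pairs_cotrans[OF x] inv_pairs_cotrans[OF y]
  have "Sd (inv_pairs (weak_join n x z)) = Sd (inv_pairs (weak_join n y z))"
    using jx jy Sd_join_sub[OF incr_inv incr_inv incr_inv ct(1) sd]
      Sd_join_sub[OF incr_inv incr_inv incr_inv ct(2) sd[symmetric]] by auto
  moreover have "Su (inv_pairs (weak_join n x z)) = Su (inv_pairs (weak_join n y z))"
    using jx jy Su_join_sub[OF incr_inv incr_inv incr_inv ct(1) su]
      Su_join_sub[OF incr_inv incr_inv incr_inv ct(2) su[symmetric]] by auto
  ultimately show ?thesis using jx jy unfolding Th_def by auto
qed

lemma Pairs_minus_N: "x \<in> perms n \<Longrightarrow> Pairs n - Npairs n x = inv_pairs x"
  unfolding Npairs_def using inv_pairs_sub_Pairs by blast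

lemma Th_meet: assumes "(x,y) \<in> Th n" "z \<in> perms n"
  shows "(weak_meet n x z, weak_meet n y z) \<in> Th n"
proof -
  have x: "x \<in> perms n" and y: "y \<in> perms n" and sd: "Sd (inv_pairs x) = Sd (inv_pairs y)"
    and su: "Su (inv_pairs x) = Su (inv_pairs y)" using assms(1) unfolding Th_def by auto
  note mx = meet_exists[OF x assms(2)] and my = meet_exists[OF y assms(2)]
  have s1: "Npairs n x \<union> Npairs n z \<subseteq> Pairs n" "Npairs n y \<union> Npairs n z \<subseteq> Pairs n"
    unfolding Npairs_def by auto
  have "Sd (inv_pairs (weak_meet n x z)) = Sd (inv_pairs (weak_meet n y z))"
    using mx my Sd_meet[OF s1(1)] Sd_meet[OF s1(2)] sd
      Pairs_minus_N[OF x] Pairs_minus_N[OF y] Pairs_minus_N[OF assms(2)] by simp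
  moreover have "Su (inv_pairs (weak_meet n x z)) = Su (inv_pairs (weak_meet n y z))"
    using mx my Su_meet[OF s1(1)] Su_meet[OF s1(2)] su
      Pairs_minus_N[OF x] Pairs_minus_N[OF y] Pairs_minus_N[OF assms(2)] by simp
  ultimately show ?thesis using mx my unfolding Th_def by auto
qed

lemma Th_lattice_congruence: "lattice_congruence n (Th n)"
  unfolding lattice_congruence_def using Th_equiv Th_join Th_meet by blast

definition swp :: "nat list \<Rightarrow> nat \<Rightarrow> nat list" where
  "swp x i = x[i := x!Suc i, Suc i := x!i]"

definition tr :: "nat \<Rightarrow> nat \<Rightarrow> nat" where
  "tr i k = (if k = i then Suc i else if k = Suc i then i else k)"

lemma length_swp[simp]: "length (swp x i) = length x"
  unfolding swp_def by simp

lemma swp_nth: "Suc i < length x \<Longrightarrow> k < length x \<Longrightarrow> swp x i ! k = x ! tr i k"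
  unfolding swp_def tr_def by (auto simp: nth_list_update)

lemma tr_tr[simp]: "tr i (tr i k) = k" unfolding tr_def by auto

lemma tr_lt: "Suc i < m \<Longrightarrow> k < m \<Longrightarrow> tr i k < m" unfolding tr_def by auto

lemma tr_less: "k < l \<Longrightarrow> \<not> (k = i \<and> l = Suc i) \<Longrightarrow> tr i k < tr i l"
  unfolding tr_def by auto

lemma set_swp: assumes "Suc i < length x" shows "set (swp x i) = set x"
proof (intro set_eqI iffI)
  fix u assume "u \<in> set (swp x i)"
  then obtain k where "k < length x" "swp x i ! k = u" by (auto simp: in_set_conv_nth)
  then show "u \<in> set x" using swp_nth[OF assms] tr_lt[OF assms] by (metis nth_mem)
next
  fix u assume "u \<in> set x"
  then obtain k where "k < length x" "x ! k = u" by (auto simp: in_set_conv_nth)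
  then show "u \<in> set (swp x i)" using swp_nth[OF assms, of "tr i k"] tr_lt[OF assms]
    by (metis length_swp nth_mem tr_tr)
qed

lemma swp_perms: "x \<in> perms n \<Longrightarrow> Suc i < n \<Longrightarrow> swp x i \<in> perms n"
proof -
  assume x: "x \<in> perms n" and i: "Suc i < n"
  have l: "length x = n" using perms_length[OF x] .
  have "distinct (swp x i)"
    unfolding swp_def using perms_distinct[OF x] l i
    by (auto simp: distinct_list_update nth_eq_iff_index_eq set_list_update in_set_conv_nth)
  then show ?thesis using set_swp[of i x] l i x unfolding perms_def by auto
qed

lemma before_swp:
  assumes d: "distinct x" and i: "Suc i < length x"
  shows "before (swp x i) u v \<longleftrightarrow>
    (before x u v \<and> \<not> (u = x!i \<and> v = x!Suc i)) \<or> (u = x!Suc i \<and> v = x!i)"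
proof
  assume "before (swp x i) u v"
  then obtain k l where kl: "k < l" "l < length x" "swp x i ! k = u" "swp x i ! l = v"
    unfolding before_def by auto
  have K: "x ! tr i k = u" "tr i k < length x" using kl swp_nth[OF i] tr_lt[OF i] by auto
  have L: "x ! tr i l = v" "tr i l < length x" using kl swp_nth[OF i] tr_lt[OF i] by auto
  show "(before x u v \<and> \<not> (u = x!i \<and> v = x!Suc i)) \<or> (u = x!Suc i \<and> v = x!i)"
  proof (cases "k = i \<and> l = Suc i")
    case True then show ?thesis using K L unfolding tr_def by auto
  next
    case False
    then have "tr i k < tr i l" using kl tr_less by auto
    then have b: "before x u v" using K L unfolding before_def by blast
    have "\<not> (u = x!i \<and> v = x!Suc i)"
    proof
      assume "u = x!i \<and> v = x!Suc i"
      then have "tr i k = i" "tr i l = Suc i"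
        using K L d i nth_eq_iff_index_eq[of x "tr i k" i] nth_eq_iff_index_eq[of x "tr i l" "Suc i"] by auto
      then have "k = Suc i" "l = i" by (metis tr_tr tr_def)+
      then show False using kl by auto
    qed
    then show ?thesis using b by auto
  qed
next
  assume h: "(before x u v \<and> \<not> (u = x!i \<and> v = x!Suc i)) \<or> (u = x!Suc i \<and> v = x!i)"
  show "before (swp x i) u v"
  proof (cases "u = x!Suc i \<and> v = x!i")
    case True
    then show ?thesis using i swp_nth[OF i, of i] swp_nth[OF i, of "Suc i"] unfolding before_def tr_def
      by (intro exI[of _ i] exI[of _ "Suc i"]) auto
  next
    case False
    then obtain K L where KL: "K < L" "L < length x" "x!K = u" "x!L = v" "\<not> (u = x!i \<and> v = x!Suc i)"
      using h unfolding before_def by auto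
    have "\<not> (K = i \<and> L = Suc i)" using KL by auto
    then have lt: "tr i K < tr i L" using KL tr_less by auto
    have "swp x i ! tr i K = u" "swp x i ! tr i L = v"
      using KL swp_nth[OF i] tr_lt[OF i] by auto
    then have "tr i K < tr i L \<and> tr i L < length (swp x i) \<and> swp x i ! tr i K = u \<and> swp x i ! tr i L = v"
      using lt tr_lt[OF i KL(2)] by simp
    then show ?thesis unfolding before_def by blast
  qed
qed

lemma inv_swp_desc:
  assumes x: "x \<in> perms n" and i: "Suc i < n" and desc: "x!Suc i < x!i"
  shows "inv_pairs (swp x i) = inv_pairs x - {(x!Suc i, x!i)}"
proof -
  have d: "distinct x" and l: "Suc i < length x" using perms_distinct[OF x] perms_length[OF x] i by auto
  have e: "(a,b) \<in> inv_pairs (swp x i) \<longleftrightarrow> (a,b) \<in> inv_pairs x - {(x!Suc i, x!i)}" for a b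
  proof -
    have "before (swp x i) b a \<longleftrightarrow> (before x b a \<and> \<not> (b = x!i \<and> a = x!Suc i)) \<or> (b = x!Suc i \<and> a = x!i)"
      by (rule before_swp[OF d l])
    then show ?thesis unfolding inv_pairs_before mem_Collect_eq case_prod_conv Diff_iff singleton_iff prod.inject
      using desc by (metis less_asym)
  qed
  show ?thesis
  proof (intro set_eqI)
    fix p show "p \<in> inv_pairs (swp x i) \<longleftrightarrow> p \<in> inv_pairs x - {(x!Suc i, x!i)}"
      using e[of "fst p" "snd p"] by simp
  qed
qed

lemma inv_swp_asc:
  assumes x: "x \<in> perms n" and i: "Suc i < n" and asc: "x!i < x!Suc i"
  shows "inv_pairs (swp x i) = inv_pairs x \<union> {(x!i, x!Suc i)}"
proof -
  have d: "distinct x" and l: "Suc i < length x" using perms_distinct[OF x] perms_length[OF x] i by auto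
  have "before x (x!i) (x!Suc i)" using l unfolding before_def by auto
  then have e: "(a,b) \<in> inv_pairs (swp x i) \<longleftrightarrow> (a,b) \<in> inv_pairs x \<union> {(x!i, x!Suc i)}" for a b
  proof -
    have "before (swp x i) b a \<longleftrightarrow> (before x b a \<and> \<not> (b = x!i \<and> a = x!Suc i)) \<or> (b = x!Suc i \<and> a = x!i)"
      by (rule before_swp[OF d l])
    then show ?thesis unfolding inv_pairs_before mem_Collect_eq case_prod_conv Un_iff singleton_iff prod.inject
      using asc \<open>before x (x!i) (x!Suc i)\<close> by (metis less_asym)
  qed
  show ?thesis
  proof (intro set_eqI)
    fix p show "p \<in> inv_pairs (swp x i) \<longleftrightarrow> p \<in> inv_pairs x \<union> {(x!i, x!Suc i)}"
      using e[of "fst p" "snd p"] by simp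
  qed
qed

definition step :: "nat \<Rightarrow> nat list \<Rightarrow> nat list \<Rightarrow> bool" where
  "step n x y \<longleftrightarrow> x \<in> perms n \<and> (\<exists>i k l. k < i \<and> Suc i < l \<and> l < n \<and>
     x!Suc i < x!k \<and> x!k < x!i \<and> x!Suc i < x!l \<and> x!l < x!i \<and> y = swp x i)"

lemma step_Th: assumes "step n x y" shows "(x,y) \<in> Th n" "y \<in> perms n"
  "card (inv_pairs y) < card (inv_pairs x)"
proof -
  obtain i k l where x: "x \<in> perms n" and h: "k < i" "Suc i < l" "l < n"
     "x!Suc i < x!k" "x!k < x!i" "x!Suc i < x!l" "x!l < x!i" "y = swp x i"
    using assms unfolding step_def by auto
  have d: "distinct x" and len: "length x = n" using perms_distinct[OF x] perms_length[OF x] by auto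
  let ?a = "x!Suc i" and ?b = "x!i" and ?c = "x!k" and ?d = "x!l"
  have inv: "inv_pairs y = inv_pairs x - {(?a, ?b)}" using inv_swp_desc[OF x] h by auto
  have ab: "(?a,?b) \<in> inv_pairs x" using h len unfolding inv_pairs_before before_def by force
  have cb: "before x ?c ?b" and ad: "before x ?a ?d" using h len unfolding before_def by force+
  have "Sd (inv_pairs y) = Sd (inv_pairs x)"
  proof
    show "Sd (inv_pairs y) \<subseteq> Sd (inv_pairs x)" using inv by (intro Sd_mono) auto
    show "Sd (inv_pairs x) \<subseteq> Sd (inv_pairs y)"
    proof
      fix pq assume pq: "pq \<in> Sd (inv_pairs x)"
      then obtain p q where pq': "pq = (p,q)" "p < q" "\<forall>c. p < c \<longrightarrow> c \<le> q \<longrightarrow> (p,c) \<in> inv_pairs x"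
        unfolding Sd_def by auto
      have "(p,c) \<noteq> (?a,?b)" if "p < c" "c \<le> q" for c
      proof
        assume e: "(p,c) = (?a,?b)"
        then have "(?a,?d) \<in> inv_pairs x" using pq' that h by auto
        then have "before x ?d ?a" unfolding inv_pairs_before by auto
        then show False using before_asym[OF d ad] by auto
      qed
      then show "pq \<in> Sd (inv_pairs y)" using pq' inv unfolding Sd_def by auto
    qed
  qed
  moreover have "Su (inv_pairs y) = Su (inv_pairs x)"
  proof
    show "Su (inv_pairs y) \<subseteq> Su (inv_pairs x)" using inv by (intro Su_mono) auto
    show "Su (inv_pairs x) \<subseteq> Su (inv_pairs y)"
    proof
      fix pq assume pq: "pq \<in> Su (inv_pairs x)"
      then obtain p q where pq': "pq = (p,q)" "p < q" "\<forall>c. p \<le> c \<longrightarrow> c < q \<longrightarrow> (c,q) \<in> inv_pairs x"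
        unfolding Su_def by auto
      have "(c,q) \<noteq> (?a,?b)" if "p \<le> c" "c < q" for c
      proof
        assume e: "(c,q) = (?a,?b)"
        then have "(?c,?b) \<in> inv_pairs x" using pq' that h by auto
        then have "before x ?b ?c" unfolding inv_pairs_before by auto
        then show False using before_asym[OF d cb] by auto
      qed
      then show "pq \<in> Su (inv_pairs y)" using pq' inv unfolding Su_def by auto
    qed
  qed
  moreover have yp: "y \<in> perms n" using swp_perms[OF x] h by auto
  ultimately show "(x,y) \<in> Th n" using x unfolding Th_def by auto
  show "y \<in> perms n" by (rule yp)
  have fin: "finite (inv_pairs x)"
    using inv_pairs_sub_Pairs[OF x] by (rule finite_subset) (auto simp: Pairs_def intro: finite_subset[of _ "{..n} \<times> {..n}"])
  show "card (inv_pairs y) < card (inv_pairs x)" using inv ab fin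
    by (metis card_Diff1_less)
qed

lemma all4: "(\<forall>p<(4::nat). P p) \<longleftrightarrow> P 0 \<and> P 1 \<and> P 2 \<and> P 3"
proof -
  have "p < 4 \<longleftrightarrow> p = 0 \<or> p = 1 \<or> p = 2 \<or> p = (3::nat)" for p by auto
  then show ?thesis by auto
qed

lemma all4': "(\<forall>p<Suc (Suc (Suc (Suc 0))). P p) \<longleftrightarrow> P 0 \<and> P 1 \<and> P 2 \<and> P 3"
  using all4[of P] by (simp add: numeral_eq_Suc)

lemma occ_val: "occurs_at x y ix \<Longrightarrow> p < length y \<Longrightarrow> q < length y \<Longrightarrow>
   (x!(ix!p) < x!(ix!q) \<longleftrightarrow> y!p < y!q)"
  unfolding occurs_at_def by blast

lemma occ_pos: "occurs_at x y ix \<Longrightarrow> p < q \<Longrightarrow> q < length y \<Longrightarrow> ix!p < ix!q"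
  unfolding occurs_at_def by (auto intro: sorted_wrt_nth_less)

lemma occ_bound: "occurs_at x y ix \<Longrightarrow> p < length y \<Longrightarrow> ix!p < length x"
  unfolding occurs_at_def by auto

lemma notTB_step: assumes x: "x \<in> perms n" and nt: "\<not> twisted_baxter x"
  shows "\<exists>y. step n x y"
proof -
  have len: "length x = n" using perms_length[OF x] .
  obtain pat ix where pat: "pat = [2,4,1,3] \<or> pat = [3,4,1,2]" and occ: "occurs_at x pat ix"
    and adj: "ix!2 = Suc (ix!1)"
    using nt unfolding twisted_baxter_def by blast
  have lp: "length pat = 4" using pat by auto
  let ?k = "ix!0" and ?i = "ix!1" and ?l = "ix!3"
  have pos: "?k < ?i" "Suc ?i < ?l" "?l < n"
    using occ_pos[OF occ, of 0 1] occ_pos[OF occ, of 2 3] occ_bound[OF occ, of 3] adj lp len by auto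
  have v1: "x!Suc ?i < x!?k" using occ_val[OF occ, of 2 0] adj lp pat by auto
  have v2: "x!?k < x!?i" using occ_val[OF occ, of 0 1] lp pat by auto
  have v3: "x!Suc ?i < x!?l" using occ_val[OF occ, of 2 3] adj lp pat by auto
  have v4: "x!?l < x!?i" using occ_val[OF occ, of 3 1] lp pat by auto
  show ?thesis unfolding step_def using x pos v1 v2 v3 v4 by blast
qed

lemma TB_no_bad: assumes x: "x \<in> perms n" and tb: "twisted_baxter x"
  and pos: "k < i" "Suc i < l" "l < n"
  and v: "x!Suc i < x!k" "x!k < x!i" "x!Suc i < x!l" "x!l < x!i"
  shows False
proof -
  have len: "length x = n" using perms_length[OF x] .
  have d: "distinct x" using perms_distinct[OF x] .
  have "x!k \<noteq> x!l" using d pos len nth_eq_iff_index_eq[of x k l] by auto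
  then consider "x!k < x!l" | "x!l < x!k" by linarith
  then show False
  proof cases
    case 1
    have "occurs_at x [2,4,1,3] [k,i,Suc i,l]"
      unfolding occurs_at_def using pos len v 1 by (simp add: all4')
    then show False using tb unfolding twisted_baxter_def by fastforce
  next
    case 2
    have "occurs_at x [3,4,1,2] [k,i,Suc i,l]"
      unfolding occurs_at_def using pos len v 2 by (simp add: all4')
    then show False using tb unfolding twisted_baxter_def by fastforce
  qed
qed

lemma TB_inv_sub: assumes x: "x \<in> perms n" and tb: "twisted_baxter x"
  shows "inv_pairs x \<subseteq> (Sd (inv_pairs x) \<union> Su (inv_pairs x))\<^sup>+"
proof -
  let ?T = "(Sd (inv_pairs x) \<union> Su (inv_pairs x))\<^sup>+"
  have len: "length x = n" using perms_length[OF x] .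
  have d: "distinct x" using perms_distinct[OF x] .
  have sx: "set x = {1..n}" using perms_set[OF x] .
  have pos_of: "\<exists>m<n. x!m = c" if "c \<in> {1..n}" for c
    using that sx len by (metis in_set_conv_nth)
  have key0: "\<forall>i j. j - i = dd \<longrightarrow> i < j \<longrightarrow> j < n \<longrightarrow> x!j < x!i \<longrightarrow> (x!j, x!i) \<in> ?T" for dd
  proof (induction dd rule: less_induct)
    case (less dd)
    show ?case
    proof (intro allI impI)
      fix i' j assume pr: "j - i' = dd" "i' < j" "j < n" "x!j < x!i'"
      have IH: "(x!jj, x!ii) \<in> ?T" if "jj - ii < j - i'" "ii < jj" "jj < n" "x!jj < x!ii" for ii jj
        using less.IH[of "jj - ii"] that pr by blast
      let ?a = "x!j" and ?b = "x!i'"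
      have inv_ab: "(?a,?b) \<in> inv_pairs x" using pr len unfolding inv_pairs_before before_def by force
      have "?a \<in> set x" "?b \<in> set x" using pr len by auto
      then have a1: "1 \<le> ?a" and bn: "?b \<le> n" using sx by auto
      show "(?a, ?b) \<in> ?T"
      proof (cases "\<exists>m. i' < m \<and> m < j \<and> ?a < x!m \<and> x!m < ?b")
        case True
        then obtain m where m: "i' < m" "m < j" "?a < x!m" "x!m < ?b" by blast
        have "(?a, x!m) \<in> ?T" using IH[where ii=m and jj=j] m pr by auto
        moreover have "(x!m, ?b) \<in> ?T" using IH[where ii=i' and jj=m] m pr by auto
        ultimately show ?thesis by (rule trancl_trans)
      next
        case noA: False
        have where_c: "m < i' \<or> j < m" if "m < n" "?a < x!m" "x!m < ?b" for m
        proof -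
          have "m \<noteq> i'" "m \<noteq> j" using that by auto
          then show ?thesis using noA that by force
        qed
        show ?thesis
        proof (cases "\<exists>k<i'. ?a < x!k \<and> x!k < ?b")
          case False
          have "(?a,?b) \<in> Su (inv_pairs x)" unfolding Su_def
          proof (intro CollectI case_prodI conjI allI impI)
            show "?a < ?b" by fact
            fix c assume c: "?a \<le> c" "c < ?b"
            show "(c, ?b) \<in> inv_pairs x"
            proof (cases "c = ?a")
              case True then show ?thesis using inv_ab by simp
            next
              case False
              then obtain m where m: "m < n" "x!m = c" using pos_of[of c] c a1 bn by auto
              then have "j < m" using where_c[of m] False c \<open>\<not> (\<exists>k<i'. ?a < x!k \<and> x!k < ?b)\<close> by auto
              then have "i' < m \<and> m < length x \<and> x!i' = ?b \<and> x!m = c" using m pr len by auto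
              then have "before x ?b c" unfolding before_def by blast
              then show ?thesis using c unfolding inv_pairs_before by auto
            qed
          qed
          then show ?thesis by auto
        next
          case left: True
          show ?thesis
          proof (cases "\<exists>l. j < l \<and> l < n \<and> ?a < x!l \<and> x!l < ?b")
            case False
            have "(?a,?b) \<in> Sd (inv_pairs x)" unfolding Sd_def
            proof (intro CollectI case_prodI conjI allI impI)
              show "?a < ?b" by fact
              fix c assume c: "?a < c" "c \<le> ?b"
              show "(?a, c) \<in> inv_pairs x"
              proof (cases "c = ?b")
                case True then show ?thesis using inv_ab by simp
              next
                case ne: False
                then obtain m where m: "m < n" "x!m = c" using pos_of[of c] c a1 bn by auto
                then have "m < i'" using where_c[of m] ne c False by auto
                then have "m < j \<and> j < length x \<and> x!m = c \<and> x!j = ?a" using m pr len by auto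
                then have "before x c ?a" unfolding before_def by blast
                then show ?thesis using c unfolding inv_pairs_before by auto
              qed
            qed
            then show ?thesis by auto
          next
            case right: True
            obtain k where k: "k < i'" "?a < x!k" "x!k < ?b" using left by blast
            obtain l where l: "j < l" "l < n" "?a < x!l" "x!l < ?b" using right by blast
            define P where "P m \<longleftrightarrow> i' < m \<and> m \<le> j \<and> x!m \<le> ?a" for m
            have Pj: "P j" unfolding P_def using pr by auto
            define m1 where "m1 = (LEAST m. P m)"
            have Pm1: "P m1" unfolding m1_def using Pj by (rule LeastI)
            have m1min: "\<not> P m" if "m < m1" for m using that unfolding m1_def using not_less_Least by blast
            define m where "m = m1 - 1"
            have m1: "m1 = Suc m" "i' \<le> m" using Pm1 unfolding m_def P_def by auto
            have hi: "?b \<le> x!m"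
            proof (cases "m = i'")
              case True then show ?thesis by simp
            next
              case False
              then have "i' < m" "m < j" using m1 Pm1 unfolding P_def by auto
              moreover have "\<not> P m" using m1min m1 by auto
              ultimately have "?a < x!m" unfolding P_def by auto
              moreover have "m < n" using \<open>m < j\<close> pr by auto
              ultimately show ?thesis using noA \<open>i' < m\<close> \<open>m < j\<close> by (meson not_less)
            qed
            have lo: "x!Suc m \<le> ?a" using Pm1 m1 unfolding P_def by auto
            have "Suc m < l" using Pm1 m1 l unfolding P_def by auto
            then show ?thesis
              using TB_no_bad[OF x tb, of k m l] k l hi lo m1 by auto
          qed
        qed
      qed
    qed
  qed
  show ?thesis
  proof
    fix p assume "p \<in> inv_pairs x"
    then obtain a b i j where h: "p = (a,b)" "a < b" "i < j" "j < length x" "x!i = b" "x!j = a"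
      unfolding inv_pairs_before before_def by auto
    then show "p \<in> ?T" using key0[of "j - i"] len by auto
  qed
qed

lemma TB_le: assumes x: "x \<in> perms n" and y: "y \<in> perms n" and tb: "twisted_baxter x"
  and sd: "Sd (inv_pairs x) \<subseteq> Sd (inv_pairs y)" and su: "Su (inv_pairs x) \<subseteq> Su (inv_pairs y)"
  shows "inv_pairs x \<subseteq> inv_pairs y"
proof -
  have "inv_pairs x \<subseteq> (Sd (inv_pairs x) \<union> Su (inv_pairs x))\<^sup>+" by (rule TB_inv_sub[OF x tb])
  also have "\<dots> \<subseteq> (inv_pairs y)\<^sup>+" using sd su Sd_sub Su_sub by (intro trancl_mono_subset) blast
  also have "\<dots> = inv_pairs y" using inv_pairs_trans[OF perms_distinct[OF y]] by (rule trancl_id)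
  finally show ?thesis .
qed

lemma TB_unique: assumes "twisted_baxter x" "twisted_baxter y" "(x,y) \<in> Th n"
  shows "x = y"
proof -
  have x: "x \<in> perms n" and y: "y \<in> perms n" and e: "Sd (inv_pairs x) = Sd (inv_pairs y)"
    "Su (inv_pairs x) = Su (inv_pairs y)" using assms(3) unfolding Th_def by auto
  have "inv_pairs x \<subseteq> inv_pairs y" using TB_le[OF x y assms(1)] e by auto
  moreover have "inv_pairs y \<subseteq> inv_pairs x" using TB_le[OF y x assms(2)] e by auto
  ultimately show ?thesis using inv_pairs_inj[OF x y] by auto
qed

definition stepR :: "nat \<Rightarrow> (nat list \<times> nat list) set" where
  "stepR n = {(x,y). step n x y}"

lemma reduce: "x \<in> perms n \<Longrightarrow> \<exists>t. twisted_baxter t \<and> (x,t) \<in> (stepR n)\<^sup>*"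
proof (induction "card (inv_pairs x)" arbitrary: x rule: less_induct)
  case less
  show ?case
  proof (cases "twisted_baxter x")
    case True then show ?thesis by auto
  next
    case False
    then obtain y where y: "step n x y" using notTB_step[OF less.prems] by blast
    note yy = step_Th[OF y]
    obtain t where "twisted_baxter t" "(y,t) \<in> (stepR n)\<^sup>*" using less.hyps[OF yy(3) yy(2)] by blast
    moreover have "(x,y) \<in> stepR n" using y unfolding stepR_def by auto
    ultimately show ?thesis by (meson converse_rtrancl_into_rtrancl)
  qed
qed

lemma stepR_Th: "(x,t) \<in> (stepR n)\<^sup>* \<Longrightarrow> x \<in> perms n \<Longrightarrow> (x,t) \<in> Th n"
proof (induction rule: rtrancl_induct)
  case base then show ?case unfolding Th_def by auto
next
  case (step y z)
  then have "(y,z) \<in> Th n" using step_Th(1) unfolding stepR_def by auto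
  then show ?case using step Th_equiv[of n] unfolding equiv_def trans_def by blast
qed

definition rk :: "nat set \<Rightarrow> nat \<Rightarrow> nat" where
  "rk S a = card {c \<in> S. c \<le> a}"

lemma st_rk: "st w = map (rk (set w)) w"
  unfolding st_def rk_def by simp

lemma rk_le: "finite S \<Longrightarrow> a \<le> b \<Longrightarrow> rk S a \<le> rk S b"
  unfolding rk_def by (intro card_mono) auto

lemma rk_mono: assumes "finite S" "b \<in> S" "a < b" shows "rk S a < rk S b"
proof -
  have "b \<in> {c \<in> S. c \<le> b}" "b \<notin> {c \<in> S. c \<le> a}" using assms by auto
  moreover have "{c \<in> S. c \<le> a} \<subseteq> {c \<in> S. c \<le> b}" using assms by auto
  ultimately have "{c \<in> S. c \<le> a} \<subset> {c \<in> S. c \<le> b}" by blast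
  then show ?thesis unfolding rk_def using assms(1) by (intro psubset_card_mono) auto
qed

lemma rk_less_iff: assumes "finite S" "a \<in> S" "b \<in> S" shows "rk S a < rk S b \<longleftrightarrow> a < b"
  using rk_mono[OF assms(1,3)] rk_le[OF assms(1), of b a] by (meson leD not_less)

lemma rk_inj: "finite S \<Longrightarrow> inj_on (rk S) S"
  unfolding inj_on_def by (metis rk_less_iff linorder_neqE_nat less_irrefl)

lemma rk_range: assumes "finite S" "a \<in> S" shows "rk S a \<in> {1..card S}"
proof -
  have "1 \<le> rk S a" unfolding rk_def using assms
    by (metis (mono_tags, lifting) One_nat_def Suc_leI card_gt_0_iff empty_iff finite_subset mem_Collect_eq order_refl subsetI)
  moreover have "rk S a \<le> card S" unfolding rk_def using assms by (intro card_mono) auto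
  ultimately show ?thesis by auto
qed

lemma rk_bij: assumes "finite S" shows "bij_betw (rk S) S {1..card S}"
proof -
  have inj: "inj_on (rk S) S" using rk_inj[OF assms] .
  have sub: "rk S ` S \<subseteq> {1..card S}" using rk_range[OF assms] by auto
  have "card (rk S ` S) = card {1..card S}" using card_image[OF inj] by simp
  then have "rk S ` S = {1..card S}" using sub by (intro card_subset_eq) auto
  then show ?thesis using inj unfolding bij_betw_def by auto
qed

lemma st_perm: assumes "distinct w" shows "st w \<in> perms (length w)"
proof -
  have fin: "finite (set w)" by simp
  have "distinct (st w)" unfolding st_rk using assms rk_inj[OF fin] by (simp add: distinct_map)
  moreover have "set (st w) = {1..length w}"
    unfolding st_rk using bij_betw_imp_surj_on[OF rk_bij[OF fin]] distinct_card[OF assms] by simp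
  ultimately show ?thesis unfolding perms_def by auto
qed

lemma length_st[simp]: "length (st w) = length w" unfolding st_def by simp

lemma st_nth: "i < length w \<Longrightarrow> st w ! i = rk (set w) (w!i)"
  unfolding st_rk by simp

lemma st_order: assumes "i < length w" "j < length w"
  shows "st w ! i < st w ! j \<longleftrightarrow> w!i < w!j"
  using st_nth[OF assms(1)] st_nth[OF assms(2)] rk_less_iff[of "set w" "w!i" "w!j"] assms by simp

lemma st_map_mono: assumes "\<forall>a\<in>set w. \<forall>b\<in>set w. a < b \<longrightarrow> f a < f b"
  shows "st (map f w) = st w"
proof -
  let ?S = "set w"
  have inj: "inj_on f ?S" using assms unfolding inj_on_def by (metis linorder_neqE_nat less_irrefl)
  have le: "f c \<le> f a \<longleftrightarrow> c \<le> a" if "c \<in> ?S" "a \<in> ?S" for c a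
    using assms that by (metis leD le_less linorder_le_less_linear)
  have "rk (f ` ?S) (f a) = rk ?S a" if "a \<in> ?S" for a
  proof -
    have "{c' \<in> f ` ?S. c' \<le> f a} = f ` {c \<in> ?S. c \<le> a}" using le that by auto
    then show ?thesis unfolding rk_def using card_image[OF inj_on_subset[OF inj]] by auto
  qed
  then show ?thesis unfolding st_rk by simp
qed

lemma st_inj: assumes "set w1 = set w2" "st w1 = st w2" shows "w1 = w2"
proof -
  have "map (rk (set w1)) w1 = map (rk (set w1)) w2" using assms unfolding st_rk by simp
  moreover have "inj_on (rk (set w1)) (set w1 \<union> set w2)" using rk_inj[of "set w1"] assms by simp
  ultimately show ?thesis using inj_on_map_eq_map by blast
qed

lemma st_perms_id: assumes "x \<in> perms n" shows "st x = x"
proof -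
  have "rk {1..n} a = a" if "a \<in> {1..n}" for a
  proof -
    have "{c \<in> {1..n}. c \<le> a} = {1..a}" using that by auto
    then show ?thesis unfolding rk_def by simp
  qed
  then show ?thesis unfolding st_rk perms_set[OF assms] by (intro map_idI) (use perms_set[OF assms] in auto)
qed

lemma map_swp: "Suc i < length w \<Longrightarrow> map f (swp w i) = swp (map f w) i"
  unfolding swp_def by (auto simp: map_update nth_map)

lemma st_swp: "Suc i < length w \<Longrightarrow> st (swp w i) = swp (st w) i"
  unfolding st_rk using set_swp[of i w] by (simp add: map_swp)

lemma st_take: "st (take k (st w)) = st (take k w)"
proof -
  have "take k (st w) = map (rk (set w)) (take k w)" unfolding st_rk by (simp add: take_map)
  moreover have "\<forall>a\<in>set (take k w). \<forall>b\<in>set (take k w). a < b \<longrightarrow> rk (set w) a < rk (set w) b"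
    using rk_mono[of "set w"] by (meson finite_set in_set_takeD)
  ultimately show ?thesis using st_map_mono by simp
qed

lemma st_drop: "st (drop k (st w)) = st (drop k w)"
proof -
  have "drop k (st w) = map (rk (set w)) (drop k w)" unfolding st_rk by (simp add: drop_map)
  moreover have "\<forall>a\<in>set (drop k w). \<forall>b\<in>set (drop k w). a < b \<longrightarrow> rk (set w) a < rk (set w) b"
    using rk_mono[of "set w"] by (meson finite_set in_set_dropD)
  ultimately show ?thesis using st_map_mono by simp
qed

lemma set_drop_perm: assumes "x \<in> perms m" shows "set (drop p x) = {1..m} - set (take p x)"
proof -
  have "set x = set (take p x) \<union> set (drop p x)" by (metis append_take_drop_id set_append)
  moreover have "set (take p x) \<inter> set (drop p x) = {}"
    using perms_distinct[OF assms] by (metis append_take_drop_id distinct_append)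
  ultimately show ?thesis using perms_set[OF assms] by auto
qed

lemma phi_unique: assumes "x \<in> perms (p+q)" "y \<in> perms (p+q)" "set (take p x) = set (take p y)"
  "st (take p x) = st (take p y)" "st (drop p x) = st (drop p y)" shows "x = y"
proof -
  have "take p x = take p y" using st_inj assms(3,4) by blast
  moreover have "set (drop p x) = set (drop p y)" using set_drop_perm[OF assms(1)] set_drop_perm[OF assms(2)] assms(3) by simp
  then have "drop p x = drop p y" using st_inj assms(5) by blast
  ultimately show ?thesis by (metis append_take_drop_id)
qed

lemma phi_eq: assumes "x \<in> perms (p+q)" "set (take p x) = Q" "st (take p x) = u" "st (drop p x) = v"
  shows "phi p q Q u v = x"
  unfolding phi_def
proof (rule the_equality)
  show "x \<in> perms (p + q) \<and> set (take p x) = Q \<and> st (take p x) = u \<and> st (drop p x) = v" using assms by auto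
  fix y assume "y \<in> perms (p + q) \<and> set (take p y) = Q \<and> st (take p y) = u \<and> st (drop p y) = v"
  then show "y = x" using phi_unique assms by metis
qed

lemma build: assumes "finite S" "card S = k" "u \<in> perms k"
  shows "\<exists>w. distinct w \<and> set w = S \<and> st w = u"
proof -
  have bij: "bij_betw (rk S) S {1..k}" using rk_bij[OF assms(1)] assms(2) by simp
  define g where "g = the_inv_into S (rk S)"
  have bg: "bij_betw g {1..k} S" unfolding g_def using bij by (rule bij_betw_the_inv_into)
  have rg: "rk S (g i) = i" if "i \<in> {1..k}" for i
    unfolding g_def using bij that by (rule f_the_inv_into_f_bij_betw)
  define w where "w = map g u"
  have su: "set u = {1..k}" "distinct u" using assms(3) unfolding perms_def by auto
  have dw: "distinct w" unfolding w_def using su bg by (simp add: distinct_map bij_betw_def)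
  have sw: "set w = S" unfolding w_def using su bg by (simp add: bij_betw_def)
  have "st w = map (rk S) w" unfolding st_rk sw ..
  also have "\<dots> = u" unfolding w_def map_map by (intro map_idI) (use rg su in auto)
  finally show ?thesis using dw sw by auto
qed

lemma phi_exists: assumes Q: "Q \<subseteq> {1..p+q}" "card Q = p" and u: "u \<in> perms p" and v: "v \<in> perms q"
  shows "phi p q Q u v \<in> perms (p+q) \<and> set (take p (phi p q Q u v)) = Q \<and>
         st (take p (phi p q Q u v)) = u \<and> st (drop p (phi p q Q u v)) = v"
proof -
  have fQ: "finite Q" using Q(1) finite_subset by blast
  obtain w1 where w1: "distinct w1" "set w1 = Q" "st w1 = u" using build[OF fQ Q(2) u] by blast
  let ?R = "{1..p+q} - Q"
  have cR: "card ?R = q" using Q fQ by (simp add: card_Diff_subset)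
  obtain w2 where w2: "distinct w2" "set w2 = ?R" "st w2 = v" using build[OF _ cR v] by blast
  have l1: "length w1 = p" using w1 Q(2) distinct_card by fastforce
  define x where "x = w1 @ w2"
  have "distinct x" unfolding x_def using w1 w2 by auto
  moreover have "set x = {1..p+q}" unfolding x_def using w1 w2 Q by auto
  ultimately have xp: "x \<in> perms (p+q)" unfolding perms_def by auto
  have "take p x = w1" "drop p x = w2" unfolding x_def using l1 by auto
  then have "phi p q Q u v = x" using phi_eq[OF xp] w1 w2 by auto
  then show ?thesis using xp \<open>take p x = w1\<close> \<open>drop p x = w2\<close> w1 w2 by auto
qed

lemma take_swp_low: "Suc i < p \<Longrightarrow> take p (swp x i) = swp (take p x) i"
  unfolding swp_def by (simp add: take_update_swap nth_take)

lemma drop_swp_low: "Suc i < p \<Longrightarrow> drop p (swp x i) = drop p x"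
  unfolding swp_def by simp

lemma take_swp_high: "p \<le> i \<Longrightarrow> take p (swp x i) = take p x"
  unfolding swp_def by simp

lemma drop_swp_high: assumes "p \<le> i" "Suc i < length x"
  shows "drop p (swp x i) = swp (drop p x) (i - p)"
proof (rule nth_equalityI)
  show "length (drop p (swp x i)) = length (swp (drop p x) (i - p))" by simp
  fix k assume k: "k < length (drop p (swp x i))"
  have l1: "Suc (i - p) < length (drop p x)" using assms by auto
  have "drop p (swp x i) ! k = swp x i ! (p + k)" using k by simp
  also have "\<dots> = x ! tr i (p + k)" using swp_nth[OF assms(2)] k by simp
  also have "tr i (p + k) = p + tr (i - p) k" using assms(1) unfolding tr_def by auto
  also have "x ! (p + tr (i - p) k) = drop p x ! tr (i - p) k"
    using tr_lt[OF l1] k by simp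
  also have "\<dots> = swp (drop p x) (i - p) ! k" using swp_nth[OF l1] k by simp
  finally show "drop p (swp x i) ! k = swp (drop p x) (i - p) ! k" .
qed

locale phictx =
  fixes p q :: nat and Q :: "nat set"
  assumes Qsub: "Q \<subseteq> {1..p+q}" and Qcard: "card Q = p"
begin

lemma props: assumes "u \<in> perms p" "v \<in> perms q"
  shows "phi p q Q u v \<in> perms (p+q)" "set (take p (phi p q Q u v)) = Q"
    "st (take p (phi p q Q u v)) = u" "st (drop p (phi p q Q u v)) = v"
  using phi_exists[OF Qsub Qcard assms] by auto

lemma ord_left: assumes "u \<in> perms p" "v \<in> perms q" "a < p" "b < p"
  shows "u!a < u!b \<longleftrightarrow> phi p q Q u v ! a < phi p q Q u v ! b"
proof -
  let ?x = "phi p q Q u v"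
  have len: "length ?x = p + q" using props(1)[OF assms(1,2)] perms_length by blast
  have "u = st (take p ?x)" using props(3)[OF assms(1,2)] by simp
  then have "u!a < u!b \<longleftrightarrow> take p ?x ! a < take p ?x ! b"
    using st_order[of a "take p ?x" b] assms len by simp
  then show ?thesis using assms by simp
qed

lemma ord_right: assumes "u \<in> perms p" "v \<in> perms q" "a < q" "b < q"
  shows "v!a < v!b \<longleftrightarrow> phi p q Q u v ! (p+a) < phi p q Q u v ! (p+b)"
proof -
  let ?x = "phi p q Q u v"
  have len: "length ?x = p + q" using props(1)[OF assms(1,2)] perms_length by blast
  have "v = st (drop p ?x)" using props(4)[OF assms(1,2)] by simp
  then have "v!a < v!b \<longleftrightarrow> drop p ?x ! a < drop p ?x ! b"
    using st_order[of a "drop p ?x" b] assms len by simp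
  then show ?thesis using assms len by simp
qed

lemma phi_swp_left: assumes u: "u \<in> perms p" and v: "v \<in> perms q" and i: "Suc i < p"
  shows "phi p q Q (swp u i) v = swp (phi p q Q u v) i"
proof -
  let ?x = "phi p q Q u v"
  note P = props[OF u v]
  have len: "length ?x = p + q" using P(1) perms_length by blast
  have lt: "Suc i < length (take p ?x)" using len i by simp
  show ?thesis
  proof (rule phi_eq)
    show "swp ?x i \<in> perms (p + q)" using swp_perms[OF P(1)] i by simp
    show "set (take p (swp ?x i)) = Q" using take_swp_low[OF i] set_swp[OF lt] P(2) by simp
    show "st (take p (swp ?x i)) = swp u i" using take_swp_low[OF i] st_swp[OF lt] P(3) by simp
    show "st (drop p (swp ?x i)) = v" using drop_swp_low[OF i] P(4) by simp
  qed
qed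

lemma phi_swp_right: assumes u: "u \<in> perms p" and v: "v \<in> perms q" and i: "Suc i < q"
  shows "phi p q Q u (swp v i) = swp (phi p q Q u v) (p + i)"
proof -
  let ?x = "phi p q Q u v"
  note P = props[OF u v]
  have len: "length ?x = p + q" using P(1) perms_length by blast
  have lt: "Suc (p + i) < length ?x" using len i by simp
  have lt2: "Suc i < length (drop p ?x)" using len i by simp
  have dr: "drop p (swp ?x (p + i)) = swp (drop p ?x) i" using drop_swp_high[OF _ lt] by simp
  show ?thesis
  proof (rule phi_eq)
    show "swp ?x (p + i) \<in> perms (p + q)" using swp_perms[OF P(1)] i by simp
    show "set (take p (swp ?x (p + i))) = Q" using take_swp_high[of p "p + i"] P(2) by simp
    show "st (take p (swp ?x (p + i))) = u" using take_swp_high[of p "p + i"] P(3) by simp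
    show "st (drop p (swp ?x (p + i))) = swp v i" using dr st_swp[OF lt2] P(4) by simp
  qed
qed

lemma step_left: assumes u: "u \<in> perms p" and v: "v \<in> perms q" and s: "step p u u'"
  shows "step (p+q) (phi p q Q u v) (phi p q Q u' v)"
proof -
  obtain i k l where h: "k < i" "Suc i < l" "l < p"
     "u!Suc i < u!k" "u!k < u!i" "u!Suc i < u!l" "u!l < u!i" "u' = swp u i"
    using s unfolding step_def by auto
  let ?x = "phi p q Q u v"
  have o: "u!a < u!b \<longleftrightarrow> ?x!a < ?x!b" if "a < p" "b < p" for a b using ord_left[OF u v that] .
  have b: "Suc i < p" "k < p" "i < p" "l < p" using h by auto
  have "?x!Suc i < ?x!k" using o[OF b(1) b(2)] h(4) by simp
  moreover have "?x!k < ?x!i" using o[OF b(2) b(3)] h(5) by simp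
  moreover have "?x!Suc i < ?x!l" using o[OF b(1) b(4)] h(6) by simp
  moreover have "?x!l < ?x!i" using o[OF b(4) b(3)] h(7) by simp
  ultimately have vals: "?x!Suc i < ?x!k" "?x!k < ?x!i" "?x!Suc i < ?x!l" "?x!l < ?x!i" by auto
  have e: "phi p q Q u' v = swp ?x i" using phi_swp_left[OF u v] h by auto
  have "k < i \<and> Suc i < l \<and> l < p + q \<and> ?x!Suc i < ?x!k \<and> ?x!k < ?x!i \<and> ?x!Suc i < ?x!l \<and> ?x!l < ?x!i \<and> phi p q Q u' v = swp ?x i"
    using vals e h by auto
  then show ?thesis unfolding step_def using props(1)[OF u v] by blast
qed

lemma step_right: assumes u: "u \<in> perms p" and v: "v \<in> perms q" and s: "step q v v'"
  shows "step (p+q) (phi p q Q u v) (phi p q Q u v')"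
proof -
  obtain i k l where h: "k < i" "Suc i < l" "l < q"
     "v!Suc i < v!k" "v!k < v!i" "v!Suc i < v!l" "v!l < v!i" "v' = swp v i"
    using s unfolding step_def by auto
  let ?x = "phi p q Q u v"
  have o: "v!a < v!b \<longleftrightarrow> ?x!(p+a) < ?x!(p+b)" if "a < q" "b < q" for a b using ord_right[OF u v that] .
  have b: "Suc i < q" "k < q" "i < q" "l < q" using h by auto
  have "?x!(p + Suc i) < ?x!(p+k)" using o[OF b(1) b(2)] h(4) by simp
  moreover have "?x!(p+k) < ?x!(p+i)" using o[OF b(2) b(3)] h(5) by simp
  moreover have "?x!(p + Suc i) < ?x!(p+l)" using o[OF b(1) b(4)] h(6) by simp
  moreover have "?x!(p+l) < ?x!(p+i)" using o[OF b(4) b(3)] h(7) by simp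
  ultimately have vals: "?x!(p + Suc i) < ?x!(p+k)" "?x!(p+k) < ?x!(p+i)" "?x!(p + Suc i) < ?x!(p+l)" "?x!(p+l) < ?x!(p+i)" by auto
  have e: "phi p q Q u v' = swp ?x (p+i)" using phi_swp_right[OF u v] h by auto
  have "p+k < p+i \<and> Suc (p+i) < p+l \<and> p+l < p + q \<and> ?x!Suc (p+i) < ?x!(p+k) \<and> ?x!(p+k) < ?x!(p+i) \<and> ?x!Suc (p+i) < ?x!(p+l) \<and> ?x!(p+l) < ?x!(p+i) \<and> phi p q Q u v' = swp ?x (p+i)"
    using vals e h by auto
  then show ?thesis unfolding step_def using props(1)[OF u v] by blast
qed

lemma chain_left: assumes "(u,t) \<in> (stepR p)\<^sup>*" "u \<in> perms p" "v \<in> perms q"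
  shows "(phi p q Q u v, phi p q Q t v) \<in> Th (p+q)"
  using assms(1)
proof (induction rule: rtrancl_induct)
  case base then show ?case using props(1)[OF assms(2,3)] unfolding Th_def by auto
next
  case (step y z)
  have y: "y \<in> perms p" using stepR_Th[OF step(1) assms(2)] unfolding Th_def by auto
  have "step (p+q) (phi p q Q y v) (phi p q Q z v)" using step_left[OF y assms(3)] step(2) unfolding stepR_def by auto
  then have "(phi p q Q y v, phi p q Q z v) \<in> Th (p+q)" by (rule step_Th(1))
  then show ?case using step.IH Th_equiv[of "p+q"] unfolding equiv_def trans_def by blast
qed

lemma chain_right: assumes "(v,t) \<in> (stepR q)\<^sup>*" "u \<in> perms p" "v \<in> perms q"
  shows "(phi p q Q u v, phi p q Q u t) \<in> Th (p+q)"
  using assms(1)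
proof (induction rule: rtrancl_induct)
  case base then show ?case using props(1)[OF assms(2,3)] unfolding Th_def by auto
next
  case (step y z)
  have y: "y \<in> perms q" using stepR_Th[OF step(1) assms(3)] unfolding Th_def by auto
  have "step (p+q) (phi p q Q u y) (phi p q Q u z)" using step_right[OF assms(2) y] step(2) unfolding stepR_def by auto
  then have "(phi p q Q u y, phi p q Q u z) \<in> Th (p+q)" by (rule step_Th(1))
  then show ?case using step.IH Th_equiv[of "p+q"] unfolding equiv_def trans_def by blast
qed

end

lemma Th_trans: "(a,b) \<in> Th n \<Longrightarrow> (b,c) \<in> Th n \<Longrightarrow> (a,c) \<in> Th n"
  unfolding Th_def by auto
lemma Th_sym: "(a,b) \<in> Th n \<Longrightarrow> (b,a) \<in> Th n"
  unfolding Th_def by auto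

lemma same_bottom: assumes "(u,u') \<in> Th p"
  obtains t where "(u,t) \<in> (stepR p)\<^sup>*" "(u',t) \<in> (stepR p)\<^sup>*"
proof -
  have u: "u \<in> perms p" and u': "u' \<in> perms p" using assms unfolding Th_def by auto
  obtain t where t: "twisted_baxter t" "(u,t) \<in> (stepR p)\<^sup>*" using reduce[OF u] by blast
  obtain t' where t': "twisted_baxter t'" "(u',t') \<in> (stepR p)\<^sup>*" using reduce[OF u'] by blast
  have "(t,t') \<in> Th p" using stepR_Th[OF t(2) u] stepR_Th[OF t'(2) u'] assms by (meson Th_sym Th_trans)
  then have "t = t'" using TB_unique t t' by blast
  then show ?thesis using that t t' by blast
qed

lemma Th_insertional: "insertional Th"
  unfolding insertional_def
proof (intro allI impI, elim conjE)
  fix p q Q u u' v v'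
  assume Q: "Q \<subseteq> {1..p + q}" "card Q = p" and uu: "(u,u') \<in> Th p" and vv: "(v,v') \<in> Th q"
  interpret phictx p q Q using Q by unfold_locales
  have u: "u \<in> perms p" "u' \<in> perms p" using uu unfolding Th_def by auto
  have v: "v \<in> perms q" "v' \<in> perms q" using vv unfolding Th_def by auto
  obtain t where t: "(u,t) \<in> (stepR p)\<^sup>*" "(u',t) \<in> (stepR p)\<^sup>*" using same_bottom[OF uu] by blast
  obtain s where s: "(v,s) \<in> (stepR q)\<^sup>*" "(v',s) \<in> (stepR q)\<^sup>*" using same_bottom[OF vv] by blast
  have "(phi p q Q u v, phi p q Q t v) \<in> Th (p+q)" using chain_left[OF t(1) u(1) v(1)] .
  moreover have "(phi p q Q u' v, phi p q Q t v) \<in> Th (p+q)" using chain_left[OF t(2) u(2) v(1)] .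
  moreover have "(phi p q Q u' v, phi p q Q u' s) \<in> Th (p+q)" using chain_right[OF s(1) u(2) v(1)] .
  moreover have "(phi p q Q u' v', phi p q Q u' s) \<in> Th (p+q)" using chain_right[OF s(2) u(2) v(2)] .
  ultimately show "(phi p q Q u v, phi p q Q u' v') \<in> Th (p+q)" by (meson Th_sym Th_trans)
qed

lemma cross_perm: assumes u: "u \<in> perms p" and v: "v \<in> perms q" shows "cross u v \<in> perms (p+q)"
proof -
  have lu: "length u = p" using perms_length[OF u] .
  have "set (map (\<lambda>i. p + i) v) = (\<lambda>i. p + i) ` {1..q}" using perms_set[OF v] by simp
  also have "\<dots> = {p+1..p+q}" by (auto simp: image_iff intro!: bexI[of _ "_ - p"])
  finally have sv: "set (map (\<lambda>i. p + i) v) = {p+1..p+q}" .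
  have "distinct (cross u v)" unfolding cross_def lu using perms_distinct[OF u] perms_distinct[OF v] sv perms_set[OF u]
    by (auto simp: distinct_map inj_on_def)
  moreover have "set (cross u v) = {1..p+q}" unfolding cross_def lu using sv perms_set[OF u] by auto
  ultimately show ?thesis unfolding perms_def by auto
qed

lemma cross_phi: assumes u: "u \<in> perms p" and v: "v \<in> perms q"
  shows "cross u v = phi p q {1..p} u v"
proof -
  have lu: "length u = p" using perms_length[OF u] .
  show ?thesis
  proof (rule phi_eq[symmetric])
    show "cross u v \<in> perms (p+q)" by (rule cross_perm[OF u v])
    show "set (take p (cross u v)) = {1..p}" unfolding cross_def using lu perms_set[OF u] by simp
    show "st (take p (cross u v)) = u" unfolding cross_def using lu st_perms_id[OF u] by simp
    have "st (map (\<lambda>i. p + i) v) = st v" by (rule st_map_mono) auto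
    then show "st (drop p (cross u v)) = v" unfolding cross_def using lu st_perms_id[OF v] by simp
  qed
qed

lemma cross_forward: assumes "(u,u') \<in> Th p" "(v,v') \<in> Th q"
  shows "(cross u v, cross u' v') \<in> Th (p+q)"
proof -
  have u: "u \<in> perms p" "u' \<in> perms p" using assms unfolding Th_def by auto
  have v: "v \<in> perms q" "v' \<in> perms q" using assms unfolding Th_def by auto
  have Q: "{1..p} \<subseteq> {1..p+q}" "card {1..p} = p" by auto
  show ?thesis using Th_insertional Q assms unfolding insertional_def cross_phi[OF u(1) v(1)] cross_phi[OF u(2) v(2)]
    by blast
qed

lemma cross_nth: assumes "length u = p" "j < p + length v"
  shows "cross u v ! j = (if j < p then u!j else p + v!(j - p))"
  using assms unfolding cross_def by (auto simp: nth_append)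

lemma cross_TB: assumes u: "u \<in> perms p" and v: "v \<in> perms q"
  and tu: "twisted_baxter u" and tv: "twisted_baxter v"
  shows "twisted_baxter (cross u v)"
proof (rule ccontr)
  assume "\<not> twisted_baxter (cross u v)"
  then obtain y where "step (p+q) (cross u v) y" using notTB_step[OF cross_perm[OF u v]] by blast
  then obtain i k l where h: "k < i" "Suc i < l" "l < p+q"
     "cross u v!Suc i < cross u v!k" "cross u v!k < cross u v!i"
     "cross u v!Suc i < cross u v!l" "cross u v!l < cross u v!i"
    unfolding step_def by blast
  have lu: "length u = p" and lv: "length v = q" using perms_length u v by auto
  have cn: "cross u v ! j = (if j < p then u!j else p + v!(j - p))" if "j < p + q" for j
    using cross_nth[OF lu] that lv by simp
  have ub: "u!j \<le> p" if "j < p" for j using perms_set[OF u] lu that by (metis atLeastAtMost_iff nth_mem)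
  have vb: "1 \<le> v!j" if "j < q" for j using perms_set[OF v] lv that by (metis atLeastAtMost_iff nth_mem)
  consider "Suc i < p" | "i < p" "p \<le> Suc i" | "p \<le> i" by linarith
  then show False
  proof cases
    case 1
    show False
    proof (cases "l < p")
      case True
      then show False using TB_no_bad[OF u tu, of k i l] h cn 1 by auto
    next
      case False
      have "l - p < q" using h False by auto
      then have "cross u v ! l > p" using cn h vb[of "l - p"] False by auto
      moreover have "cross u v ! i \<le> p" using cn ub 1 h by auto
      ultimately show False using h by auto
    qed
  next
    case 2
    have "Suc i - p < q" using h 2 by auto
    then have "cross u v ! Suc i > p" using cn h vb[of "Suc i - p"] 2 by auto
    moreover have "cross u v ! i \<le> p" using cn ub 2 h by auto
    ultimately show False using h by auto
  next
    case 3
    have kp: "p \<le> k"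
    proof (rule ccontr)
      assume "\<not> p \<le> k"
      then have "cross u v ! k \<le> p" using cn ub h by auto
      moreover have "Suc i - p < q" using h 3 by auto
      moreover have "cross u v ! Suc i > p" using cn h 3 vb[of "Suc i - p"] \<open>Suc i - p < q\<close> by auto
      ultimately show False using h by auto
    qed
    have "v!Suc (i-p) < v!(k-p)" "v!(k-p) < v!(i-p)" "v!Suc (i-p) < v!(l-p)" "v!(l-p) < v!(i-p)"
      using h cn 3 kp by (auto simp: Suc_diff_le)
    moreover have "k - p < i - p" "Suc (i - p) < l - p" "l - p < q" using h kp by auto
    ultimately show False using TB_no_bad[OF v tv, of "k-p" "i-p" "l-p"] by auto
  qed
qed

lemma cross_inj: assumes "length u = length u'" "cross u v = cross u' v'" shows "u = u'" "v = v'"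
proof -
  show "u = u'" using assms unfolding cross_def by (metis append_eq_append_conv)
  then have "map (\<lambda>i. length u + i) v = map (\<lambda>i. length u + i) v'" using assms unfolding cross_def by simp
  then show "v = v'" using inj_map_eq_map[of "\<lambda>i. length u + i"] by (simp add: inj_def)
qed

lemma Th_translational: "translational Th"
  unfolding translational_def
proof (intro allI impI)
  fix p q u u' v v'
  assume pr: "u \<in> perms p \<and> u' \<in> perms p \<and> v \<in> perms q \<and> v' \<in> perms q"
  show "(cross u v, cross u' v') \<in> Th (p+q) \<longleftrightarrow> (u,u') \<in> Th p \<and> (v,v') \<in> Th q"
  proof
    assume "(u,u') \<in> Th p \<and> (v,v') \<in> Th q"
    then show "(cross u v, cross u' v') \<in> Th (p+q)" using cross_forward by blast
  next
    assume h: "(cross u v, cross u' v') \<in> Th (p+q)"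
    obtain t1 where t1: "twisted_baxter t1" "(u,t1) \<in> (stepR p)\<^sup>*" using reduce pr by blast
    obtain t2 where t2: "twisted_baxter t2" "(v,t2) \<in> (stepR q)\<^sup>*" using reduce pr by blast
    obtain t3 where t3: "twisted_baxter t3" "(u',t3) \<in> (stepR p)\<^sup>*" using reduce pr by blast
    obtain t4 where t4: "twisted_baxter t4" "(v',t4) \<in> (stepR q)\<^sup>*" using reduce pr by blast
    have e1: "(u,t1) \<in> Th p" "(u',t3) \<in> Th p" using stepR_Th t1 t3 pr by auto
    have e2: "(v,t2) \<in> Th q" "(v',t4) \<in> Th q" using stepR_Th t2 t4 pr by auto
    have ps: "t1 \<in> perms p" "t2 \<in> perms q" "t3 \<in> perms p" "t4 \<in> perms q"
      using e1 e2 unfolding Th_def by auto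
    have "(cross u v, cross t1 t2) \<in> Th (p+q)" using cross_forward[OF e1(1) e2(1)] .
    moreover have "(cross u' v', cross t3 t4) \<in> Th (p+q)" using cross_forward[OF e1(2) e2(2)] .
    ultimately have "(cross t1 t2, cross t3 t4) \<in> Th (p+q)" using h by (meson Th_sym Th_trans)
    moreover have "twisted_baxter (cross t1 t2)" "twisted_baxter (cross t3 t4)"
      using cross_TB ps t1 t2 t3 t4 by auto
    ultimately have "cross t1 t2 = cross t3 t4" using TB_unique by blast
    moreover have "length t1 = length t3" using ps perms_length by metis
    ultimately have "t1 = t3" "t2 = t4" using cross_inj by blast+
    then show "(u,u') \<in> Th p \<and> (v,v') \<in> Th q" using e1 e2 by (meson Th_sym Th_trans)
  qed
qed

lemma Th_H_family: "H_family Th"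
  unfolding H_family_def using Th_lattice_congruence Th_translational Th_insertional by blast

lemma before_Cons: "before (h # t) u v \<longleftrightarrow> (u = h \<and> v \<in> set t) \<or> before t u v"
proof
  assume "before (h # t) u v"
  then obtain i j where ij: "i < j" "j < length (h # t)" "(h#t)!i = u" "(h#t)!j = v" unfolding before_def by auto
  show "(u = h \<and> v \<in> set t) \<or> before t u v"
  proof (cases i)
    case 0
    then have "u = h" using ij by simp
    moreover have "v = t ! (j - 1)" "j - 1 < length t" using ij 0 by (auto simp: nth_Cons')
    ultimately show ?thesis by auto
  next
    case (Suc i')
    then obtain j' where "j = Suc j'" using ij by (cases j) auto
    then have "i' < j' \<and> j' < length t \<and> t!i' = u \<and> t!j' = v" using ij Suc by auto
    then show ?thesis unfolding before_def by blast
  qed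
next
  assume "(u = h \<and> v \<in> set t) \<or> before t u v"
  then show "before (h # t) u v"
  proof
    assume "u = h \<and> v \<in> set t"
    then obtain j where "j < length t" "t!j = v" "u = h" by (auto simp: in_set_conv_nth)
    then have "0 < Suc j \<and> Suc j < length (h#t) \<and> (h#t)!0 = u \<and> (h#t)!Suc j = v" by simp
    then show ?thesis unfolding before_def by blast
  next
    assume "before t u v"
    then obtain i j where "i < j" "j < length t" "t!i = u" "t!j = v" unfolding before_def by auto
    then have "Suc i < Suc j \<and> Suc j < length (h#t) \<and> (h#t)!Suc i = u \<and> (h#t)!Suc j = v" by simp
    then show ?thesis unfolding before_def by blast
  qed
qed

lemma inv_pairs_Nil: "inv_pairs [] = {}"
  unfolding inv_pairs_def by auto

lemma inv_pairs_Cons: "inv_pairs (h # t) = (\<lambda>a. (a,h)) ` set (filter (\<lambda>a. a < h) t) \<union> inv_pairs t"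
  unfolding inv_pairs_before before_Cons by auto

lemma g1_perm: "[3,4,1,2] \<in> perms 4" unfolding perms_def by auto
lemma g2_perm: "[2,4,1,3] \<in> perms 4" unfolding perms_def by auto
lemma y1_perm: "[3,1,4,2] \<in> perms 4" unfolding perms_def by auto
lemma y2_perm: "[2,1,4,3] \<in> perms 4" unfolding perms_def by auto

lemma inv_g1: "inv_pairs [3,4,1,2] = {(1,3),(2,3),(1,4),(2,4)}"
  by (simp add: inv_pairs_Cons inv_pairs_Nil insert_commute)
lemma inv_y1: "inv_pairs [3,1,4,2] = {(1,3),(2,3),(2,4)}"
  by (simp add: inv_pairs_Cons inv_pairs_Nil insert_commute)
lemma inv_g2: "inv_pairs [2,4,1,3] = {(1,2),(1,4),(3,4)}"
  by (simp add: inv_pairs_Cons inv_pairs_Nil insert_commute)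
lemma inv_y2: "inv_pairs [2,1,4,3] = {(1,2),(3,4)}"
  by (simp add: inv_pairs_Cons inv_pairs_Nil insert_commute)

lemma lower_star_eq:
  assumes g: "g \<in> perms n" and y0: "y0 \<in> perms n"
    and ig: "inv_pairs g = insert e (inv_pairs y0)" and e: "e \<notin> inv_pairs y0"
    and H: "\<And>y. y \<in> perms n \<Longrightarrow> inv_pairs y \<subseteq> inv_pairs g \<Longrightarrow> e \<in> inv_pairs y \<Longrightarrow> inv_pairs y = inv_pairs g"
  shows "lower_star g = y0"
proof -
  have lg: "length g = n" using perms_length[OF g] .
  have ne: "y0 \<noteq> g" using ig e by auto
  have cov: "weak_covered n y0 g"
    unfolding weak_covered_def
  proof (intro conjI y0 g)
    show "weak_lt y0 g" unfolding weak_lt_def weak_le_def using ig ne by auto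
    show "\<not> (\<exists>z\<in>perms n. weak_lt y0 z \<and> weak_lt z g)"
    proof
      assume "\<exists>z\<in>perms n. weak_lt y0 z \<and> weak_lt z g"
      then obtain z where z: "z \<in> perms n" "weak_lt y0 z" "weak_lt z g" by blast
      have s1: "inv_pairs y0 \<subseteq> inv_pairs z" "inv_pairs z \<subseteq> inv_pairs g" "z \<noteq> y0" "z \<noteq> g"
        using z unfolding weak_lt_def weak_le_def by auto
      have "inv_pairs z \<noteq> inv_pairs y0" using inv_pairs_inj[OF z(1) y0] s1 by auto
      then have "e \<in> inv_pairs z" using s1 ig by auto
      then have "inv_pairs z = inv_pairs g" using H z(1) s1 by auto
      then show False using inv_pairs_inj[OF z(1) g] s1 by auto
    qed
  qed
  show ?thesis unfolding lower_star_def lg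
  proof (rule the_equality)
    show "weak_covered n y0 g" by (rule cov)
    fix y assume c: "weak_covered n y g"
    then have y: "y \<in> perms n" "inv_pairs y \<subseteq> inv_pairs g" "y \<noteq> g"
      unfolding weak_covered_def weak_lt_def weak_le_def by auto
    have "e \<notin> inv_pairs y"
    proof
      assume "e \<in> inv_pairs y"
      then have "inv_pairs y = inv_pairs g" using H y by auto
      then show False using inv_pairs_inj[OF y(1) g] y by auto
    qed
    then have sub: "inv_pairs y \<subseteq> inv_pairs y0" using y ig by auto
    show "y = y0"
    proof (rule ccontr)
      assume "y \<noteq> y0"
      then have "weak_lt y y0" unfolding weak_lt_def weak_le_def using sub by auto
      moreover have "weak_lt y0 g" using cov unfolding weak_covered_def by auto
      ultimately show False using c y0 unfolding weak_covered_def by auto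
    qed
  qed
qed

lemma lower_star_g1: "lower_star [3,4,1,2] = [3,1,4,2]"
proof (rule lower_star_eq[OF g1_perm y1_perm, of "(1,4)"])
  show "inv_pairs [3,4,1,2] = insert (1,4) (inv_pairs [3,1,4,2])" unfolding inv_g1 inv_y1 by auto
  show "(1,4) \<notin> inv_pairs [3,1,4,2]" unfolding inv_y1 by auto
  fix y assume y: "y \<in> perms 4" "inv_pairs y \<subseteq> inv_pairs [3,4,1,2]" "(1,4) \<in> inv_pairs y"
  have ct: "cotrans (inv_pairs y)" using inv_pairs_cotrans[OF y(1)] .
  have ctD: "(a,b) \<in> inv_pairs y \<or> (b,c) \<in> inv_pairs y" if "a < b" "b < c" "(a,c) \<in> inv_pairs y" for a b c
    using ct that unfolding cotrans_def by blast
  have "(1,2) \<in> inv_pairs y \<or> (2,4) \<in> inv_pairs y" using ctD[of 1 2 4] y(3) by simp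
  then have a: "(2,4) \<in> inv_pairs y" using y(2) unfolding inv_g1 by auto
  have "(1,3) \<in> inv_pairs y \<or> (3,4) \<in> inv_pairs y" using ctD[of 1 3 4] y(3) by simp
  then have b: "(1,3) \<in> inv_pairs y" using y(2) unfolding inv_g1 by auto
  have "(1,2) \<in> inv_pairs y \<or> (2,3) \<in> inv_pairs y" using ctD[of 1 2 3] b by simp
  then have c: "(2,3) \<in> inv_pairs y" using y(2) unfolding inv_g1 by auto
  show "inv_pairs y = inv_pairs [3,4,1,2]" using a b c y(2,3) unfolding inv_g1 by auto
qed

lemma lower_star_g2: "lower_star [2,4,1,3] = [2,1,4,3]"
proof (rule lower_star_eq[OF g2_perm y2_perm, of "(1,4)"])
  show "inv_pairs [2,4,1,3] = insert (1,4) (inv_pairs [2,1,4,3])" unfolding inv_g2 inv_y2 by auto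
  show "(1,4) \<notin> inv_pairs [2,1,4,3]" unfolding inv_y2 by auto
  fix y assume y: "y \<in> perms 4" "inv_pairs y \<subseteq> inv_pairs [2,4,1,3]" "(1,4) \<in> inv_pairs y"
  have ct: "cotrans (inv_pairs y)" using inv_pairs_cotrans[OF y(1)] .
  have ctD: "(a,b) \<in> inv_pairs y \<or> (b,c) \<in> inv_pairs y" if "a < b" "b < c" "(a,c) \<in> inv_pairs y" for a b c
    using ct that unfolding cotrans_def by blast
  have "(1,2) \<in> inv_pairs y \<or> (2,4) \<in> inv_pairs y" using ctD[of 1 2 4] y(3) by simp
  then have a: "(1,2) \<in> inv_pairs y" using y(2) unfolding inv_g2 by auto
  have "(1,3) \<in> inv_pairs y \<or> (3,4) \<in> inv_pairs y" using ctD[of 1 3 4] y(3) by simp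
  then have b: "(3,4) \<in> inv_pairs y" using y(2) unfolding inv_g2 by auto
  show "inv_pairs y = inv_pairs [2,4,1,3]" using a b y(2,3) unfolding inv_g2 by auto
qed

lemma Th_contracts: "contracts Th [3,4,1,2]" "contracts Th [2,4,1,3]"
proof -
  have "step 4 [3,4,1,2] [3,1,4,2]" unfolding step_def using g1_perm
    by (intro conjI exI[of _ 1] exI[of _ 0] exI[of _ 3]) (auto simp: swp_def)
  then have "([3,4,1,2],[3,1,4,2]) \<in> Th 4" by (rule step_Th(1))
  moreover have "length [3,4,1,2::nat] = 4" by simp
  ultimately show "contracts Th [3,4,1,2]" unfolding contracts_def lower_star_g1 by metis
  have "step 4 [2,4,1,3] [2,1,4,3]" unfolding step_def using g2_perm
    by (intro conjI exI[of _ 1] exI[of _ 0] exI[of _ 3]) (auto simp: swp_def)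
  then have "([2,4,1,3],[2,1,4,3]) \<in> Th 4" by (rule step_Th(1))
  moreover have "length [2,4,1,3::nat] = 4" by simp
  ultimately show "contracts Th [2,4,1,3]" unfolding contracts_def lower_star_g2 by metis
qed

lemma join_is: assumes "x \<in> perms n" "y \<in> perms n" "w \<in> perms n" "inv_pairs w = inv_pairs x \<union> inv_pairs y"
  shows "weak_join n x y = w"
proof -
  note J = join_exists[OF assms(1,2)]
  have "inv_pairs (weak_join n x y) = (inv_pairs w)\<^sup>+" using J assms(4) by simp
  also have "\<dots> = inv_pairs w" using inv_pairs_trans[OF perms_distinct[OF assms(3)]] by simp
  finally show ?thesis using inv_pairs_inj J assms(3) by blast
qed

lemma meet_is: assumes "x \<in> perms n" "y \<in> perms n" "w \<in> perms n" "inv_pairs w = inv_pairs x \<inter> inv_pairs y"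
  shows "weak_meet n x y = w"
proof -
  note M = meet_exists[OF assms(1,2)]
  have "Npairs n x \<union> Npairs n y = Npairs n w"
    using assms(4) unfolding Npairs_def by auto
  moreover have "trans (Npairs n w)" unfolding Npairs_def
    by (intro compl_props inv_pairs_sub_Pairs[OF assms(3)] inv_pairs_trans[OF perms_distinct[OF assms(3)]] inv_pairs_cotrans[OF assms(3)])
  ultimately have "inv_pairs (weak_meet n x y) = Pairs n - Npairs n w" using M by simp
  also have "\<dots> = inv_pairs w" using Pairs_minus_N[OF assms(3)] .
  finally show ?thesis using inv_pairs_inj M assms(3) by blast
qed

lemma swp_nth_other: "Suc i < length y \<Longrightarrow> m < length y \<Longrightarrow> m \<noteq> i \<Longrightarrow> m \<noteq> Suc i \<Longrightarrow> swp y i ! m = y ! m"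
  unfolding swp_def by simp

lemma swp_nth_i: "Suc i < length y \<Longrightarrow> swp y i ! i = y ! Suc i"
  unfolding swp_def by simp

lemma swp_nth_Si: "Suc i < length y \<Longrightarrow> swp y i ! Suc i = y ! i"
  unfolding swp_def by simp

lemma swp_swp: "Suc k < length y \<Longrightarrow> swp (swp y k) k = y"
  unfolding swp_def by (simp add: list_update_swap)

lemma swp_comm: assumes "Suc a < length y" "Suc b < length y" "Suc a < b \<or> Suc b < a"
  shows "swp (swp y a) b = swp (swp y b) a"
proof (rule nth_equalityI)
  show "length (swp (swp y a) b) = length (swp (swp y b) a)" by simp
  fix m assume m: "m < length (swp (swp y a) b)"
  have "swp (swp y a) b ! m = y ! tr a (tr b m)"
    using m assms swp_nth tr_lt by simp
  moreover have "swp (swp y b) a ! m = y ! tr b (tr a m)"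
    using m assms swp_nth tr_lt by simp
  moreover have "tr a (tr b m) = tr b (tr a m)" using assms(3) unfolding tr_def by auto
  ultimately show "swp (swp y a) b ! m = swp (swp y b) a ! m" by simp
qed

locale hfam =
  fixes \<Theta> :: "nat \<Rightarrow> (nat list \<times> nat list) set"
  assumes H: "H_family \<Theta>" and c1: "contracts \<Theta> [3,4,1,2]" and c2: "contracts \<Theta> [2,4,1,3]"
begin

lemma LC: "lattice_congruence n (\<Theta> n)" using H unfolding H_family_def by blast
lemma INS: "insertional \<Theta>" using H unfolding H_family_def by blast

lemma EQ: "equiv (perms n) (\<Theta> n)" using LC unfolding lattice_congruence_def by blast

lemma refl: "x \<in> perms n \<Longrightarrow> (x,x) \<in> \<Theta> n"
  using EQ[of n] unfolding equiv_def refl_on_def by blast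
lemma sym: "(x,y) \<in> \<Theta> n \<Longrightarrow> (y,x) \<in> \<Theta> n"
  using EQ[of n] unfolding equiv_def sym_def by blast
lemma trn: "(x,y) \<in> \<Theta> n \<Longrightarrow> (y,z) \<in> \<Theta> n \<Longrightarrow> (x,z) \<in> \<Theta> n"
  using EQ[of n] unfolding equiv_def trans_def by blast

lemma join_compat: "(x,y) \<in> \<Theta> n \<Longrightarrow> z \<in> perms n \<Longrightarrow> (weak_join n x z, weak_join n y z) \<in> \<Theta> n"
  using LC unfolding lattice_congruence_def by blast
lemma meet_compat: "(x,y) \<in> \<Theta> n \<Longrightarrow> z \<in> perms n \<Longrightarrow> (weak_meet n x z, weak_meet n y z) \<in> \<Theta> n"
  using LC unfolding lattice_congruence_def by blast

lemma square:
  assumes y: "y \<in> perms n" and i: "Suc i < n" and desc: "y!Suc i < y!i"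
    and yy: "(y, swp y i) \<in> \<Theta> n" and j: "Suc j < n" and dj: "Suc j < i \<or> Suc i < j"
  shows "(swp y j, swp (swp y i) j) \<in> \<Theta> n"
proof -
  let ?y' = "swp y i" and ?z = "swp y j" and ?z' = "swp (swp y i) j"
  have len: "length y = n" using perms_length[OF y] .
  have y': "?y' \<in> perms n" using swp_perms[OF y i] .
  have z: "?z \<in> perms n" using swp_perms[OF y j] .
  have z': "?z' \<in> perms n" using swp_perms[OF y' j] .
  have iy': "inv_pairs ?y' = inv_pairs y - {(y!Suc i, y!i)}" using inv_swp_desc[OF y i desc] .
  have e1: "?y'!j = y!j" "?y'!Suc j = y!Suc j"
    using swp_nth_other[of i y] len i j dj by auto
  have "y!j \<noteq> y!Suc j" using perms_distinct[OF y] len j nth_eq_iff_index_eq[of y j "Suc j"] by auto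
  then consider "y!j < y!Suc j" | "y!Suc j < y!j" by linarith
  then show ?thesis
  proof cases
    case 1
    have iz: "inv_pairs ?z = inv_pairs y \<union> {(y!j, y!Suc j)}" using inv_swp_asc[OF y j 1] .
    have iz': "inv_pairs ?z' = inv_pairs ?y' \<union> {(y!j, y!Suc j)}" using inv_swp_asc[OF y' j] e1 1 by simp
    have j1: "weak_join n y ?z' = ?z" using join_is[OF y z' z] iz iz' iy' by auto
    have j2: "weak_join n ?y' ?z' = ?z'" using join_is[OF y' z' z'] iz' by auto
    have "(weak_join n ?y' ?z', weak_join n y ?z') \<in> \<Theta> n" using join_compat[OF sym[OF yy] z'] .
    then show ?thesis using j1 j2 sym by simp
  next
    case 2
    have iz: "inv_pairs ?z = inv_pairs y - {(y!Suc j, y!j)}" using inv_swp_desc[OF y j 2] .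
    have iz': "inv_pairs ?z' = inv_pairs ?y' - {(y!Suc j, y!j)}" using inv_swp_desc[OF y' j] e1 2 by simp
    have m1: "weak_meet n y ?z = ?z" using meet_is[OF y z z] iz by auto
    have m2: "weak_meet n ?y' ?z = ?z'" using meet_is[OF y' z z'] iz iz' iy' by auto
    have "(weak_meet n y ?z, weak_meet n ?y' ?z) \<in> \<Theta> n" using meet_compat[OF yy z] .
    then show ?thesis using m1 m2 by simp
  qed
qed

definition cnd :: "nat \<Rightarrow> nat list \<Rightarrow> nat \<Rightarrow> nat \<Rightarrow> nat \<Rightarrow> bool" where
  "cnd n y k l i \<longleftrightarrow> k < i \<and> Suc i < l \<and> l < n \<and> y!Suc i < y!k \<and> y!k < y!i \<and> y!Suc i < y!l \<and> y!l < y!i"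

lemma move:
  assumes base: "\<And>y. y \<in> perms n \<Longrightarrow> cnd n y (i - 1) (i + 2) i \<Longrightarrow> (y, swp y i) \<in> \<Theta> n"
  shows "y \<in> perms n \<Longrightarrow> cnd n y k l i \<Longrightarrow> (y, swp y i) \<in> \<Theta> n"
proof (induction "(i - Suc k) + (l - Suc (Suc i))" arbitrary: y k l rule: less_induct)
  case less
  note y = less.prems(1) and c = less.prems(2)
  have len: "length y = n" using perms_length[OF y] .
  have h: "k < i" "Suc i < l" "l < n" "y!Suc i < y!k" "y!k < y!i" "y!Suc i < y!l" "y!l < y!i"
    using c unfolding cnd_def by auto
  show ?case
  proof (cases "Suc k < i")
    case True
    let ?y0 = "swp y k"
    have kl: "Suc k < n" using True h by auto
    have y0: "?y0 \<in> perms n" using swp_perms[OF y kl] .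
    have v: "?y0 ! Suc k = y!k" "?y0 ! i = y!i" "?y0 ! Suc i = y!Suc i" "?y0 ! l = y!l"
      using swp_nth_Si[of k y] swp_nth_other[of k y] len kl True h by auto
    have c0: "cnd n ?y0 (Suc k) l i" unfolding cnd_def using v h True by auto
    have IH: "(?y0, swp ?y0 i) \<in> \<Theta> n"
      using less.hyps[OF _ y0 c0] True h by auto
    have sq: "(swp ?y0 k, swp (swp ?y0 i) k) \<in> \<Theta> n"
      using square[OF y0 _ _ IH kl] v h True by auto
    have "swp ?y0 k = y" using swp_swp[of k y] kl len by simp
    moreover have "swp (swp ?y0 i) k = swp y i"
    proof -
      have "swp (swp ?y0 i) k = swp (swp ?y0 k) i"
        using swp_comm[of i ?y0 k] h kl True len by simp
      then show ?thesis using swp_swp[of k y] kl len by simp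
    qed
    ultimately show ?thesis using sq by simp
  next
    case False
    then have ki: "k = i - 1" using h by auto
    show ?thesis
    proof (cases "l = i + 2")
      case True
      then show ?thesis using base y c ki by simp
    next
      case False
      let ?j = "l - 1"
      have jl: "Suc ?j < n" "Suc i < ?j" using h False by auto
      let ?y0 = "swp y ?j"
      have y0: "?y0 \<in> perms n" using swp_perms[OF y jl(1)] .
      have v: "?y0 ! ?j = y!l" "?y0 ! i = y!i" "?y0 ! Suc i = y!Suc i" "?y0 ! k = y!k"
        using swp_nth_i[of ?j y] swp_nth_other[of ?j y] len jl h by auto
      have c0: "cnd n ?y0 k ?j i" unfolding cnd_def using v h jl by auto
      have IH: "(?y0, swp ?y0 i) \<in> \<Theta> n"
        using less.hyps[OF _ y0 c0] h jl by auto
      have sq: "(swp ?y0 ?j, swp (swp ?y0 i) ?j) \<in> \<Theta> n"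
        using square[OF y0 _ _ IH jl(1)] v h jl by auto
      have "swp ?y0 ?j = y" using swp_swp[of ?j y] jl len by simp
      moreover have "swp (swp ?y0 i) ?j = swp y i"
      proof -
        have "swp (swp ?y0 i) ?j = swp (swp ?y0 ?j) i"
          using swp_comm[of i ?y0 ?j] h jl len by simp
        then show ?thesis using swp_swp[of ?j y] jl len by simp
      qed
      ultimately show ?thesis using sq by simp
    qed
  qed
qed

end

lemma st_pat1: assumes "a < c" "c < d" "d < b" shows "st [c,b,a,d] = [2,4,1,3]"
proof -
  define f where "f x = (if x = (1::nat) then a else if x = 2 then c else if x = 3 then d else b)" for x
  have "[c,b,a,d] = map f [2,4,1,3]" by (simp add: f_def)
  moreover have "st (map f [2,4,1,3]) = st [2,4,1,3]" by (rule st_map_mono) (use assms in \<open>auto simp: f_def\<close>)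
  moreover have "st [2,4,1,3] = [2,4,1,3]" using st_perms_id[OF g2_perm] .
  ultimately show ?thesis by simp
qed

lemma st_pat2: assumes "a < d" "d < c" "c < b" shows "st [c,b,a,d] = [3,4,1,2]"
proof -
  define f where "f x = (if x = (1::nat) then a else if x = 2 then d else if x = 3 then c else b)" for x
  have "[c,b,a,d] = map f [3,4,1,2]" by (simp add: f_def)
  moreover have "st (map f [3,4,1,2]) = st [3,4,1,2]" by (rule st_map_mono) (use assms in \<open>auto simp: f_def\<close>)
  moreover have "st [3,4,1,2] = [3,4,1,2]" using st_perms_id[OF g1_perm] .
  ultimately show ?thesis by simp
qed

lemma take4: "4 \<le> length w \<Longrightarrow> take 4 w = [w!0, w!1, w!2, w!3]"
  by (cases w; cases "tl w"; cases "tl (tl w)"; cases "tl (tl (tl w))") (auto simp: numeral_eq_Suc)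

context hfam
begin

lemma pat_contr: assumes "G = [2,4,1,3] \<or> G = [3,4,1,2]" shows "(G, swp G 1) \<in> \<Theta> 4"
proof -
  have "swp [2,4,1,3] 1 = lower_star [2,4,1,3]" unfolding lower_star_g2 by (simp add: swp_def)
  moreover have "swp [3,4,1,2] 1 = lower_star [3,4,1,2]" unfolding lower_star_g1 by (simp add: swp_def)
  moreover have "length [2,4,1,3::nat] = 4" "length [3,4,1,2::nat] = 4" by simp_all
  ultimately show ?thesis using assms c1 c2 unfolding contracts_def by metis
qed

lemma ins_app: assumes "Q \<subseteq> {1..p+q}" "card Q = p" "(u,u') \<in> \<Theta> p" "(v,v') \<in> \<Theta> q"
  shows "(phi p q Q u v, phi p q Q u' v') \<in> \<Theta> (p+q)"
  using INS assms unfolding insertional_def by blast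

lemma base: assumes y: "y \<in> perms n" and i0: "0 < i" and c: "cnd n y (i - 1) (i + 2) i"
  shows "(y, swp y i) \<in> \<Theta> n"
proof -
  have len: "length y = n" using perms_length[OF y] .
  have dy: "distinct y" using perms_distinct[OF y] .
  have h: "i + 2 < n" "y!Suc i < y!(i-1)" "y!(i-1) < y!i" "y!Suc i < y!(i+2)" "y!(i+2) < y!i"
    using c unfolding cnd_def by auto
  define m where "m = i - 1"
  define P where "P = take m y"
  define w where "w = drop m y"
  define N where "N = n - m"
  have N4: "4 \<le> N" and mN: "m + N = n" using h i0 unfolding N_def m_def by auto
  have lw: "length w = N" and lP: "length P = m" unfolding w_def P_def N_def using len h m_def by auto
  have dw: "distinct w" and dP: "distinct P" unfolding w_def P_def using dy by auto
  have QP1: "set P \<subseteq> {1..m+N}"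
    using perms_set[OF y] mN unfolding P_def by (auto dest: in_set_takeD)
  have QP2: "card (set P) = m" using distinct_card[OF dP] lP by simp
  note QP = QP1 QP2
  have yN: "y \<in> perms (m+N)" using y mN by simp
  have yphi: "phi m N (set P) (st P) (st w) = y"
    by (rule phi_eq[OF yN]) (auto simp: P_def w_def)
  have mi: "m \<le> i" "i - m = 1" unfolding m_def using i0 by auto
  have Si: "Suc i < length y" using h len by auto
  have swp_take: "take m (swp y i) = P" unfolding P_def using take_swp_high[OF mi(1)] .
  have swp_drop: "drop m (swp y i) = swp w 1" unfolding w_def using drop_swp_high[OF mi(1) Si] mi by simp
  have sy: "swp y i \<in> perms (m+N)" using swp_perms[OF y] h mN by auto
  have "Suc 1 < length w" using lw N4 by simp
  then have stsw: "st (swp w 1) = swp (st w) 1" by (rule st_swp)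
  have yphi': "phi m N (set P) (st P) (swp (st w) 1) = swp y i"
  proof (rule phi_eq[OF sy])
    show "set (take m (swp y i)) = set P" using swp_take by simp
    show "st (take m (swp y i)) = st P" using swp_take by simp
    show "st (drop m (swp y i)) = swp (st w) 1" unfolding swp_drop by (rule stsw)
  qed
  define W where "W = st w"
  have W: "W \<in> perms N" unfolding W_def using st_perm[OF dw] lw by simp
  have lW: "length W = N" using W perms_length by blast
  have dW: "distinct W" using perms_distinct[OF W] .
  define R where "R = set (take 4 W)"
  have R: "R \<subseteq> {1..4+(N-4)}" "card R = 4"
    unfolding R_def using perms_set[OF W] N4 dW lW distinct_card[of "take 4 W"] by (auto dest: in_set_takeD)
  have W4: "W \<in> perms (4 + (N-4))" using W N4 by simp
  have tw: "take 4 w = [y!(i-1), y!i, y!Suc i, y!(i+2)]"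
  proof -
    have "4 \<le> length w" using lw N4 by simp
    then have "take 4 w = [w!0, w!1, w!2, w!3]" by (rule take4)
    moreover have "w!0 = y!(i-1)" "w!1 = y!i" "w!2 = y!Suc i" "w!3 = y!(i+2)"
      unfolding w_def m_def using len h i0 by auto
    ultimately show ?thesis by simp
  qed
  define G where "G = st (take 4 W)"
  have G: "G = [2,4,1,3] \<or> G = [3,4,1,2]"
  proof -
    have "G = st [y!(i-1), y!i, y!Suc i, y!(i+2)]" unfolding G_def W_def st_take tw ..
    moreover have "y!(i-1) \<noteq> y!(i+2)" using dy len h nth_eq_iff_index_eq[of y "i-1" "i+2"] by auto
    ultimately show ?thesis using st_pat1[of "y!Suc i" "y!(i-1)" "y!(i+2)" "y!i"]
      st_pat2[of "y!Suc i" "y!(i+2)" "y!(i-1)" "y!i"] h by (cases "y!(i-1) < y!(i+2)") auto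
  qed
  have vperm: "st (drop 4 W) \<in> perms (N-4)" using st_perm[of "drop 4 W"] dW lW by simp
  have Wphi: "phi 4 (N-4) R G (st (drop 4 W)) = W"
    by (rule phi_eq[OF W4]) (auto simp: R_def G_def)
  have l4: "Suc 1 < length (take 4 W)" using lW N4 by simp
  have Wphi': "phi 4 (N-4) R (swp G 1) (st (drop 4 W)) = swp W 1"
  proof (rule phi_eq)
    show "swp W 1 \<in> perms (4 + (N-4))" using swp_perms[OF W4] N4 by simp
    show "set (take 4 (swp W 1)) = R" unfolding R_def using take_swp_low[of 1 4 W] set_swp[OF l4] by simp
    show "st (take 4 (swp W 1)) = swp G 1" unfolding G_def using take_swp_low[of 1 4 W] st_swp[OF l4] by simp
    show "st (drop 4 (swp W 1)) = st (drop 4 W)" using drop_swp_low[of 1 4 W] by simp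
  qed
  have "(phi 4 (N-4) R G (st (drop 4 W)), phi 4 (N-4) R (swp G 1) (st (drop 4 W))) \<in> \<Theta> (4 + (N-4))"
    using ins_app[OF R pat_contr[OF G] refl[OF vperm]] .
  then have WW: "(W, swp W 1) \<in> \<Theta> N" using Wphi Wphi' N4 by simp
  have sP: "st P \<in> perms m" using st_perm[OF dP] lP by simp
  have "(phi m N (set P) (st P) W, phi m N (set P) (st P) (swp W 1)) \<in> \<Theta> (m+N)"
    using ins_app[OF QP refl[OF sP] WW] .
  then show ?thesis using yphi yphi' mN unfolding W_def by simp
qed

lemma force: assumes "step n x x'" shows "(x,x') \<in> \<Theta> n"
proof -
  obtain i k l where x: "x \<in> perms n" and c: "cnd n x k l i" and x': "x' = swp x i"
    using assms unfolding step_def cnd_def by blast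
  have i0: "0 < i" using c unfolding cnd_def by auto
  have "(x, swp x i) \<in> \<Theta> n" using move[OF base[OF _ i0] x c] by blast
  then show ?thesis using x' by simp
qed

lemma chain: "(x,t) \<in> (stepR n)\<^sup>* \<Longrightarrow> x \<in> perms n \<Longrightarrow> (x,t) \<in> \<Theta> n"
proof (induction rule: rtrancl_induct)
  case base then show ?case using refl by blast
next
  case (step y z)
  then have "(y,z) \<in> \<Theta> n" using force unfolding stepR_def by auto
  then show ?case using step trn by blast
qed

lemma Th_sub: "(x,y) \<in> Th n \<Longrightarrow> (x,y) \<in> \<Theta> n"
proof -
  assume xy: "(x,y) \<in> Th n"
  obtain t where t: "(x,t) \<in> (stepR n)\<^sup>*" "(y,t) \<in> (stepR n)\<^sup>*" using same_bottom[OF xy] by blast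
  have x: "x \<in> perms n" "y \<in> perms n" using xy unfolding Th_def by auto
  show ?thesis using chain[OF t(1) x(1)] chain[OF t(2) x(2)] sym trn by blast
qed

end

lemma H_gen_eq: "H_gen {[3,4,1,2], [2,4,1,3]} n = Th n"
proof
  show "H_gen {[3,4,1,2], [2,4,1,3]} n \<subseteq> Th n"
    unfolding H_gen_def using Th_H_family Th_contracts by blast
  show "Th n \<subseteq> H_gen {[3,4,1,2], [2,4,1,3]} n"
  proof
    fix pr assume "pr \<in> Th n"
    then obtain x y where xy: "pr = (x,y)" "(x,y) \<in> Th n" by (cases pr) auto
    have "(x,y) \<in> \<Theta> n" if "H_family \<Theta>" "\<forall>g\<in>{[3,4,1,2], [2,4,1,3]}. contracts \<Theta> g" for \<Theta>
    proof -
      interpret hfam \<Theta> using that by unfold_locales auto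
      show ?thesis using Th_sub[OF xy(2)] .
    qed
    then show "pr \<in> H_gen {[3,4,1,2], [2,4,1,3]} n" unfolding H_gen_def xy by blast
  qed
qed

definition botf :: "nat list set \<Rightarrow> nat list" where
  "botf A = (THE t. t \<in> A \<and> twisted_baxter t)"

lemma cls_sub: "A \<in> perms n // Th n \<Longrightarrow> A \<subseteq> perms n"
  by (metis Th_equiv Union_quotient Sup_upper)

lemma cls_bot: assumes A: "A \<in> perms n // Th n"
  shows "botf A \<in> A" "twisted_baxter (botf A)" "\<And>t. t \<in> A \<Longrightarrow> twisted_baxter t \<Longrightarrow> t = botf A"
proof -
  obtain x where x: "x \<in> perms n" "A = Th n `` {x}" using A by (rule quotientE)
  obtain t where t: "twisted_baxter t" "(x,t) \<in> (stepR n)\<^sup>*" using reduce[OF x(1)] by blast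
  have tA: "t \<in> A" using stepR_Th[OF t(2) x(1)] x(2) by auto
  have uniq: "s = t" if "s \<in> A" "twisted_baxter s" for s
  proof -
    have "(x,s) \<in> Th n" "(x,t) \<in> Th n" using that tA x(2) by auto
    then have "(s,t) \<in> Th n" by (meson Th_sym Th_trans)
    then show ?thesis using TB_unique that(2) t(1) by blast
  qed
  have bt: "botf A = t" unfolding botf_def
  proof (rule the_equality)
    show "t \<in> A \<and> twisted_baxter t" using tA t(1) by blast
    fix s assume "s \<in> A \<and> twisted_baxter s" then show "s = t" using uniq by blast
  qed
  show "botf A \<in> A" unfolding bt by (rule tA)
  show "twisted_baxter (botf A)" unfolding bt by (rule t(1))
  show "\<And>s. s \<in> A \<Longrightarrow> twisted_baxter s \<Longrightarrow> s = botf A" unfolding bt by (rule uniq)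
qed

theorem theorem9p7:
  fixes n :: nat
  shows "\<exists>f. bij_betw f (perms n // H_gen {[3,4,1,2], [2,4,1,3]} n)
                         {x \<in> perms n. twisted_baxter x} \<and>
             (\<forall>A \<in> perms n // H_gen {[3,4,1,2], [2,4,1,3]} n.
              \<forall>B \<in> perms n // H_gen {[3,4,1,2], [2,4,1,3]} n.
                quot_le A B \<longleftrightarrow> weak_le (f A) (f B))"
proof (intro exI[of _ botf] conjI)
  let ?Q = "perms n // Th n"
  have bij: "bij_betw botf ?Q {x \<in> perms n. twisted_baxter x}"
    unfolding bij_betw_def
  proof
    show "inj_on botf ?Q"
    proof (rule inj_onI)
      fix A B assume A: "A \<in> ?Q" and B: "B \<in> ?Q" and e: "botf A = botf B"
      have "botf A \<in> A \<inter> B" using cls_bot(1)[OF A] cls_bot(1)[OF B] e by auto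
      then show "A = B" using quotient_disj[OF Th_equiv A B] by auto
    qed
    show "botf ` ?Q = {x \<in> perms n. twisted_baxter x}"
    proof
      show "botf ` ?Q \<subseteq> {x \<in> perms n. twisted_baxter x}"
        using cls_bot cls_sub by blast
      show "{x \<in> perms n. twisted_baxter x} \<subseteq> botf ` ?Q"
      proof
        fix t assume t: "t \<in> {x \<in> perms n. twisted_baxter x}"
        let ?A = "Th n `` {t}"
        have A: "?A \<in> ?Q" using t by (auto intro: quotientI)
        have "t \<in> ?A" using t unfolding Th_def by auto
        then have "t = botf ?A" using cls_bot(3)[OF A] t by auto
        then show "t \<in> botf ` ?Q" using A by blast
      qed
    qed
  qed
  then show "bij_betw botf (perms n // H_gen {[3,4,1,2], [2,4,1,3]} n) {x \<in> perms n. twisted_baxter x}"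
    unfolding H_gen_eq .
  have ord: "quot_le A B \<longleftrightarrow> weak_le (botf A) (botf B)" if A: "A \<in> ?Q" and B: "B \<in> ?Q" for A B
  proof
    assume "weak_le (botf A) (botf B)"
    then show "quot_le A B" unfolding quot_le_def using cls_bot(1)[OF A] cls_bot(1)[OF B] by blast
  next
    assume "quot_le A B"
    then obtain x y where xy: "x \<in> A" "y \<in> B" "weak_le x y" unfolding quot_le_def by blast
    have a: "(botf A, x) \<in> Th n" using cls_bot(1)[OF A] xy(1) A by (metis Th_equiv quotient_eq_iff)
    have b: "(botf B, y) \<in> Th n" using cls_bot(1)[OF B] xy(2) B by (metis Th_equiv quotient_eq_iff)
    have pa: "botf A \<in> perms n" "botf B \<in> perms n" using a b unfolding Th_def by auto
    have "Sd (inv_pairs (botf A)) \<subseteq> Sd (inv_pairs (botf B))"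
      using a b xy(3) Sd_mono unfolding Th_def weak_le_def by auto
    moreover have "Su (inv_pairs (botf A)) \<subseteq> Su (inv_pairs (botf B))"
      using a b xy(3) Su_mono unfolding Th_def weak_le_def by auto
    ultimately show "weak_le (botf A) (botf B)"
      using TB_le[OF pa cls_bot(2)[OF A]] unfolding weak_le_def by blast
  qed
  show "\<forall>A \<in> perms n // H_gen {[3,4,1,2], [2,4,1,3]} n.
        \<forall>B \<in> perms n // H_gen {[3,4,1,2], [2,4,1,3]} n.
          quot_le A B \<longleftrightarrow> weak_le (botf A) (botf B)"
    unfolding H_gen_eq using ord by blast
qed


end
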